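(* Consider Projected Stochastic Gradient Descent (PSGD) as defined below, with $\alpha_t=a/(u+t)^\gamma$ for some $a,u>0$ and $\gamma\in[0,1]$, and assume Conditions (D1) and (D2). Then there exist positive constants $J,I,K,L$ such that the following hold. - For all $t\ge0$ and $z\ge0$: $$\mathbb P\Big(\min_{x^\star\in\mathcal X^\star}\|x_{t+1}-x^\star\|\ge z\Big)\le J e^{-I t^\gamma z}.$$ - For all $t\ge1$: $$\mathbb E\Big[\min_{x^\star\in\mathcal X^\star}\|x_{t+1}-x^\star\|\Big]\le \frac{K}{t^\gamma} \qquad\text{and}\qquad \mathbb E\Big[l(x_{t+1})-\min_{x\in\mathcal X}l(x)\Big]\le\frac{L}{t^\gamma}.$$
   Context: $\mathcal X\subseteq\mathbb R^d$ is a nonempty closed bounded convex set, and $\|\cdot\|$ is the Euclidean norm. $l:\mathcal X\to\mathbb R$ is Lipschitz continuous, and $\mathcal X^\star:=\arg\min_{x\in\mathcal X}l(x)$. $\Pi_{\mathcal X}(y):=\arg\min_{z\in\mathcal X}\|y-z\|$ is the Euclidean projection. $\nabla l:\mathcal X\to\mathbb R^d$ denotes a fixed map giving the gradient (or a chosen subgradient) of $l$. PSGD: on a probability space with filtration $(\mathcal F_t)_{t\ge0}$, $x_0\in\mathcal X$ is $\mathcal F_0$-measurable, and for $t\ge0$ $$y_{t+1}=x_t-\alpha_t c_t,\qquad x_{t+1}=\Pi_{\mathcal X}(y_{t+1}),$$ where $c_t$ is an $\mathcal F_{t+1}$-measurable random vector with $\mathbb E[c_t\mid\mathcal F_t]=\nabla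 l(x_t)$. Condition (D1): there is $\kappa>0$ such that for every $x\in\mathcal X$ and every $x^\star\in\mathcal X^\star$ with $\|x-x^\star\|=\min_{z\in\mathcal X^\star}\|x-z\|$, $$\nabla l(x)^\top(x-x^\star)\ge\kappa\|x-x^\star\|.$$ Condition (D2): there are $\lambda>0$ and $M<\infty$ such that $\mathbb E[e^{\lambda\|c_t\|}\mid\mathcal F_t]\le M$ almost surely for all $t\ge0$. *)

theory Defs
  imports "HOL-Analysis.Analysis" "HOL-Probability.Probability"
begin

definition is_filtration :: "'w measure \<Rightarrow> (nat \<Rightarrow> 'w measure) \<Rightarrow> bool" where
  "is_filtration M F \<longleftrightarrow> (\<forall>t. subalgebra M (F t)) \<and> (\<forall>s t. s \<le> t \<longrightarrow> sets (F s) \<subseteq> sets (F t))"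

definition cond_exp_eq ::
  "'w measure \<Rightarrow> 'w measure \<Rightarrow> ('w \<Rightarrow> 'a::euclidean_space) \<Rightarrow> ('w \<Rightarrow> 'a) \<Rightarrow> bool" where
  "cond_exp_eq M G c v \<longleftrightarrow> integrable M c \<and>
     (\<forall>b\<in>Basis. AE \<omega> in M. real_cond_exp M G (\<lambda>\<omega>. c \<omega> \<bullet> b) \<omega> = v \<omega> \<bullet> b)"

definition argmin_set :: "'a set \<Rightarrow> ('a \<Rightarrow> real) \<Rightarrow> 'a set" where
  "argmin_set X l = {x \<in> X. \<forall>y\<in>X. l x \<le> l y}"

text \<open>Real power t^gamma for t \<ge> 0 with the convention 0^0 = 1.\<close>
definition rpow :: "real \<Rightarrow> real \<Rightarrow> real" where
  "rpow t g = (if g = 0 then 1 else t powr g)"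

end

theory Submission
  imports Defs
begin


lemma exp_taylor2: "exp (t::real) \<le> 1 + t + t^2/2 * exp (max t 0)"
proof (cases "t < 0")
  case True
  have "\<exists>s. t < s \<and> s < 0 \<and> exp t = (\<Sum>m<2. exp 0 / fact m * t ^ m) + exp s / fact 2 * t ^ 2"
    by (rule Maclaurin_minus[where diff="\<lambda>_. exp"]) (use True in \<open>auto intro: DERIV_exp\<close>)
  then obtain s where s: "s < 0" "exp t = (\<Sum>m<2. exp 0 / fact m * t ^ m) + exp s / fact 2 * t ^ 2" by blast
  have "exp s \<le> 1" using s by simp
  hence "exp s / 2 * t^2 \<le> 1/2 * t^2" by (intro mult_right_mono) auto
  moreover have "(\<Sum>m<2. exp 0 / fact m * t ^ m) = 1 + t" by (simp add: numeral_2_eq_2)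
  ultimately show ?thesis using s True by (simp add: max_def)
next
  case False
  obtain s where s: "\<bar>s\<bar> \<le> \<bar>t\<bar>" "exp t = (\<Sum>m<2. t ^ m / fact m) + exp s / fact 2 * t ^ 2"
    using Maclaurin_exp_le[of t 2] by blast
  have "s \<le> t" using s(1) False by linarith
  hence "exp s \<le> exp t" by simp
  hence "exp s / 2 * t^2 \<le> exp t / 2 * t^2" by (intro mult_right_mono) auto
  moreover have "(\<Sum>m<2. t ^ m / fact m) = 1 + t" by (simp add: numeral_2_eq_2)
  ultimately have "exp t \<le> 1 + t + exp t / 2 * t^2" using s(2) by simp
  thus ?thesis using False by (simp add: max_def mult.commute)
qed

lemma exp_taylor_abs: "exp (t::real) \<le> 1 + t + t^2/2 * exp \<bar>t\<bar>"
proof -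
  have "exp (max t 0) \<le> exp \<bar>t\<bar>" by simp
  hence "t^2/2 * exp (max t 0) \<le> t^2/2 * exp \<bar>t\<bar>" by (intro mult_left_mono) auto
  thus ?thesis using exp_taylor2[of t] by linarith
qed

lemma powr_subadd1:
  fixes x g :: real assumes "0 \<le> x" "0 \<le> g" "g \<le> 1"
  shows "(x+1) powr g \<le> x powr g + 1"
proof -
  define t where "t = x/(x+1)"
  have t01: "0 \<le> t" "t \<le> 1" using assms by (auto simp: t_def)
  have 1: "1 - t = 1/(x+1)" using assms by (simp add: t_def field_simps)
  have "t powr 1 \<le> t powr g" by (rule powr_mono') (use assms t01 in auto)
  moreover have "(1-t) powr 1 \<le> (1-t) powr g" by (rule powr_mono') (use assms t01 in auto)
  ultimately have "1 \<le> t powr g + (1-t) powr g" using t01 by simp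
  hence "(x+1) powr g * 1 \<le> (x+1) powr g * (t powr g + (1-t) powr g)"
    by (intro mult_left_mono) auto
  also have "\<dots> = ((x+1)*t) powr g + ((x+1)*(1-t)) powr g"
    using assms t01 by (simp add: distrib_left powr_mult)
  also have "(x+1)*t = x" using assms by (simp add: t_def)
  also have "(x+1)*(1-t) = 1" using assms 1 by simp
  finally show ?thesis by simp
qed

lemma norm_sub_le_quad:
  fixes v w :: "'a::real_inner"
  assumes "v \<noteq> 0"
  shows "norm (v - w) \<le> norm v - (v \<bullet> w)/norm v + (norm w)^2/(2*norm v)"
proof -
  define r where "r = norm v"
  have r: "r > 0" using assms by (simp add: r_def)
  define A where "A = (v \<bullet> w)/r"
  define Bq where "Bq = (norm w)^2/(2*r)"
  have cs: "\<bar>v \<bullet> w\<bar> \<le> r * norm w" using Cauchy_Schwarz_ineq2[of v w] by (simp add: r_def)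
  have nn: "0 \<le> r - A + Bq"
  proof -
    have "A \<le> norm w" using cs r by (simp add: A_def divide_le_eq mult.commute abs_le_iff)
    have "r - norm w + Bq = (r - norm w)^2/(2*r) + r/2" using r
      by (simp add: Bq_def field_simps power2_eq_square) 
    moreover have "(r - norm w)^2/(2*r) \<ge> 0" using r by simp
    ultimately show ?thesis using \<open>A \<le> norm w\<close> r by linarith
  qed
  have "(norm (v - w))^2 = r^2 - 2*(v \<bullet> w) + (norm w)^2"
    by (simp add: r_def power2_norm_eq_inner inner_diff inner_commute algebra_simps)
  also have "\<dots> = r^2 - 2*r*A + 2*r*Bq" using r by (simp add: A_def Bq_def field_simps)
  also have "\<dots> \<le> (r - A + Bq)^2"
  proof -
    have "(r - A + Bq)^2 = r^2 - 2*r*A + 2*r*Bq + (A-Bq)^2" by (simp add: power2_eq_square algebra_simps)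
    thus ?thesis using zero_le_power2[of "A-Bq"] by linarith
  qed
  finally have "(norm (v - w))^2 \<le> (r - A + Bq)^2" .
  hence "norm (v - w) \<le> r - A + Bq" using nn by (simp add: power2_le_iff_abs_le)
  thus ?thesis by (simp add: r_def A_def Bq_def)
qed




lemma key_pointwise:
  fixes y q cc :: "'a::real_inner" and d d' \<alpha> \<theta> c0 D E0 \<delta>0 r0 A1 :: real
  assumes a: "\<alpha> > 0" and th: "\<theta> > 0" and c0: "c0 > 0"
    and d'le: "d' \<le> norm (y - \<alpha> *\<^sub>R cc - q)"
    and dr: "d \<le> norm (y - q)" and rd: "norm (y - q) < d + \<alpha>*\<delta>0" and rho: "\<alpha>*r0 \<le> d" and r0: "r0 > 0"
    and d0: "0 \<le> \<delta>0"
    and d'D: "0 \<le> d'" "d' \<le> D" and dD: "0 \<le> d" "d \<le> D"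
    and dlip: "\<bar>d' - d\<bar> \<le> \<alpha> * norm cc"
    and E0: "E0 = exp (D/c0)" and A1: "A1 = E0 + E0*D/(2*c0)"
  shows "exp (\<theta> * (c0*(exp(d'/c0) - 1))) \<le> exp (\<theta> * (c0*(exp(d/c0)-1)) + (\<theta>*\<alpha>)*exp (d/c0)*\<delta>0) *
    (1 - (\<theta>*\<alpha>)*exp (d/c0)*(((1/norm (y-q)) *\<^sub>R (y-q)) \<bullet> cc) + (\<theta>*\<alpha>)*exp (d/c0)/(2*r0)*(norm cc)^2
       + (\<theta>*\<alpha>)*E0*\<alpha>/(2*c0)*(norm cc)^2 + (\<theta>*\<alpha>)^2*A1^2/2*(norm cc)^2*exp((\<theta>*\<alpha>)*A1*norm cc))"
proof -
  define \<beta> where "\<beta> = \<theta>*\<alpha>"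
  define n where "n = norm cc"
  define r where "r = norm (y - q)"
  define hp where "hp = exp (d/c0)"
  define u where "u = (1/r) *\<^sub>R (y-q)"
  define \<Delta> where "\<Delta> = d' - d"
  define m where "m = min (-(u \<bullet> cc) + n^2/(2*r0)) n"
  have b: "\<beta> > 0" using a th by (simp add: \<beta>_def)
  have "\<alpha>*r0 > 0" using a r0 by simp
  hence r: "r > 0" using rho dr unfolding r_def by linarith
  have hp: "0 < hp" "hp \<le> E0" using dD c0 by (auto simp: hp_def E0 divide_right_mono)
  have E0p: "E0 > 0" by (simp add: E0)
  have nn: "n \<ge> 0" by (simp add: n_def)
  have nu: "norm u = 1" using r by (simp add: u_def r_def)
  have ucs: "\<bar>u \<bullet> cc\<bar> \<le> n" using Cauchy_Schwarz_ineq2[of u cc] nu by (simp add: n_def)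
  have yq: "y - q \<noteq> 0" using r by (auto simp: r_def)
  have q1: "norm ((y - q) - \<alpha> *\<^sub>R cc) \<le> r - ((y-q) \<bullet> (\<alpha> *\<^sub>R cc))/r + (norm (\<alpha> *\<^sub>R cc))^2/(2*r)"
    using norm_sub_le_quad[OF yq, of "\<alpha> *\<^sub>R cc"] by (simp add: r_def)
  have q2: "((y-q) \<bullet> (\<alpha> *\<^sub>R cc))/r = \<alpha> * (u \<bullet> cc)" using r by (simp add: u_def)
  have q3: "(norm (\<alpha> *\<^sub>R cc))^2/(2*r) \<le> \<alpha> * n^2/(2*r0)"
  proof -
    have "(norm (\<alpha> *\<^sub>R cc))^2 = \<alpha>^2 * n^2" using a by (simp add: n_def power_mult_distrib)
    moreover have "\<alpha>^2 * n^2/(2*r) \<le> \<alpha>^2 * n^2/(2*(\<alpha>*r0))"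
      using r a r0 rho dr by (intro divide_left_mono mult_pos_pos) (auto simp: r_def)
    moreover have "\<alpha>^2 * n^2/(2*(\<alpha>*r0)) = \<alpha> * n^2/(2*r0)" using a by (simp add: power2_eq_square)
    ultimately show ?thesis by simp
  qed
  have "y - \<alpha> *\<^sub>R cc - q = (y - q) - \<alpha> *\<^sub>R cc" by (simp add: algebra_simps)
  hence D1: "\<Delta> \<le> \<alpha>*\<delta>0 + \<alpha>*(-(u \<bullet> cc) + n^2/(2*r0))"
    using d'le q1 q2 q3 rd by (simp add: \<Delta>_def r_def algebra_simps)
  have D2: "\<Delta> \<le> \<alpha>*\<delta>0 + \<alpha>*n"
  proof -
    have "0 \<le> \<alpha>*\<delta>0" using a d0 by simp
    thus ?thesis using dlip unfolding \<Delta>_def n_def by linarith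
  qed
  have Dm: "\<Delta> \<le> \<alpha>*(\<delta>0 + m)"
    using D1 D2 by (simp add: m_def min_def distrib_left)
  have "0 \<le> n^2/(2*r0)" using r0 by simp
  hence mle: "m \<le> n" "-n \<le> m" using ucs nn unfolding m_def min_def by (auto simp: abs_le_iff)
  have tay: "c0*(exp(d'/c0) - 1) \<le> c0*(exp(d/c0)-1) + hp*\<Delta> + E0*\<Delta>^2/(2*c0)"
  proof -
    have "exp (\<Delta>/c0) \<le> 1 + \<Delta>/c0 + (\<Delta>/c0)^2/2 * exp (max (\<Delta>/c0) 0)" by (rule exp_taylor2)
    hence "hp * exp (\<Delta>/c0) \<le> hp * (1 + \<Delta>/c0 + (\<Delta>/c0)^2/2 * exp (max (\<Delta>/c0) 0))"
      using hp by (intro mult_left_mono) auto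
    moreover have "hp * exp (\<Delta>/c0) = exp (d'/c0)" using c0
      by (simp add: hp_def \<Delta>_def diff_divide_distrib flip: exp_add)
    moreover have "hp * exp (max (\<Delta>/c0) 0) \<le> E0"
    proof -
      have "hp * exp (max (\<Delta>/c0) 0) = exp (max d d' / c0)" using c0
        by (simp add: hp_def \<Delta>_def mult_exp_exp max_def field_simps)
      also have "\<dots> \<le> E0" using dD d'D c0 by (simp add: E0 divide_right_mono)
      finally show ?thesis .
    qed
    ultimately have "exp (d'/c0) \<le> hp + hp*\<Delta>/c0 + (\<Delta>/c0)^2/2 * E0"
    proof -
      assume h1: "hp * exp (\<Delta>/c0) \<le> hp * (1 + \<Delta>/c0 + (\<Delta>/c0)^2/2 * exp (max (\<Delta>/c0) 0))"
        and h2: "hp * exp (\<Delta>/c0) = exp (d'/c0)" and h3: "hp * exp (max (\<Delta>/c0) 0) \<le> E0"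
      have "(\<Delta>/c0)^2/2 * (hp * exp (max (\<Delta>/c0) 0)) \<le> (\<Delta>/c0)^2/2 * E0"
        using h3 by (intro mult_left_mono) auto
      thus ?thesis using h1 h2 by (simp add: algebra_simps)
    qed
    hence "c0 * exp (d'/c0) \<le> c0 * (hp + hp*\<Delta>/c0 + (\<Delta>/c0)^2/2 * E0)" using c0 by simp
    thus ?thesis using c0 by (simp add: hp_def algebra_simps power2_eq_square)
  qed
  have Dsq1: "\<Delta>^2 \<le> \<alpha> * (\<alpha> * n^2)"
  proof -
    have "\<bar>\<Delta>\<bar> \<le> \<alpha>*n" using dlip by (simp add: \<Delta>_def n_def)
    hence "\<bar>\<Delta>\<bar>^2 \<le> (\<alpha>*n)^2" by (intro power_mono) auto
    thus ?thesis by (simp add: power_mult_distrib power2_eq_square mult_ac)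
  qed
  have Dsq2: "\<Delta>^2 \<le> \<alpha> * (D * n)"
  proof -
    have "\<bar>\<Delta>\<bar> \<le> \<alpha>*n" using dlip by (simp add: \<Delta>_def n_def)
    moreover have "\<bar>\<Delta>\<bar> \<le> D" using dD d'D by (simp add: \<Delta>_def abs_le_iff)
    ultimately have "\<bar>\<Delta>\<bar> * \<bar>\<Delta>\<bar> \<le> D * (\<alpha>*n)" by (intro mult_mono) auto
    thus ?thesis by (simp add: power2_eq_square algebra_simps)
  qed
  define Y where "Y = \<beta>*hp*m + \<beta>*E0/(2*c0) * min (\<alpha>*n^2) (D*n)"
  have step6: "\<theta> * (c0*(exp(d'/c0) - 1)) \<le> \<theta> * (c0*(exp(d/c0)-1)) + \<beta>*hp*\<delta>0 + Y"
  proof -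
    have "\<theta> * (c0*(exp(d'/c0) - 1)) \<le> \<theta> * (c0*(exp(d/c0)-1) + hp*\<Delta> + E0*\<Delta>^2/(2*c0))"
      using tay th by (intro mult_left_mono) auto
    moreover have "\<theta>*(hp*\<Delta>) \<le> \<theta>*(hp*(\<alpha>*(\<delta>0 + m)))"
      using Dm th hp by (intro mult_left_mono) auto
    moreover have "\<theta>*(E0*\<Delta>^2/(2*c0)) \<le> \<theta>*(E0*(\<alpha> * min (\<alpha>*n^2) (D*n))/(2*c0))"
      using Dsq1 Dsq2 th E0p c0 by (intro mult_left_mono divide_right_mono) (auto simp: min_def)
    ultimately show ?thesis by (simp add: Y_def \<beta>_def algebra_simps)
  qed
  have Yabs: "\<bar>Y\<bar> \<le> \<beta>*A1*n"
  proof -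
    have "\<bar>\<beta>*hp*m\<bar> \<le> \<beta>*E0*n"
    proof -
      have "\<bar>m\<bar> \<le> n" using mle by auto
      hence "hp*\<bar>m\<bar> \<le> E0*n" using hp nn by (intro mult_mono) auto
      thus ?thesis using b hp by (simp add: abs_mult mult.assoc)
    qed
    moreover have "\<bar>\<beta>*E0/(2*c0) * min (\<alpha>*n^2) (D*n)\<bar> \<le> \<beta>*E0/(2*c0)*(D*n)"
    proof -
      have "0 \<le> min (\<alpha>*n^2) (D*n)" using a nn dD by auto
      moreover have "min (\<alpha>*n^2) (D*n) \<le> D*n" by simp
      ultimately have "\<bar>min (\<alpha>*n^2) (D*n)\<bar> \<le> D*n" by simp
      moreover have "0 \<le> \<beta>*E0/(2*c0)" using b E0p c0 by simp
      ultimately have "\<beta>*E0/(2*c0) * \<bar>min (\<alpha>*n^2) (D*n)\<bar> \<le> \<beta>*E0/(2*c0) * (D*n)"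
        by (intro mult_left_mono)
      moreover have "\<bar>\<beta>*E0/(2*c0) * min (\<alpha>*n^2) (D*n)\<bar> = \<beta>*E0/(2*c0) * \<bar>min (\<alpha>*n^2) (D*n)\<bar>"
        using \<open>0 \<le> \<beta>*E0/(2*c0)\<close> by (metis abs_mult abs_of_nonneg)
      ultimately show ?thesis by simp
    qed
    moreover have "\<bar>Y\<bar> \<le> \<bar>\<beta>*hp*m\<bar> + \<bar>\<beta>*E0/(2*c0) * min (\<alpha>*n^2) (D*n)\<bar>"
      unfolding Y_def by (rule abs_triangle_ineq)
    moreover have "\<beta>*E0*n + \<beta>*E0/(2*c0)*(D*n) = \<beta>*A1*n" by (simp add: A1 algebra_simps)
    ultimately show ?thesis by linarith
  qed
  have Yup: "Y \<le> \<beta>*hp*(-(u \<bullet> cc) + n^2/(2*r0)) + \<beta>*E0*\<alpha>/(2*c0)*n^2"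
  proof -
    have "\<beta>*hp*m \<le> \<beta>*hp*(-(u \<bullet> cc) + n^2/(2*r0))" using b hp by (intro mult_left_mono) (auto simp: m_def)
    moreover have "\<beta>*E0/(2*c0) * min (\<alpha>*n^2) (D*n) \<le> \<beta>*E0/(2*c0) * (\<alpha>*n^2)"
      using b E0p c0 by (intro mult_left_mono) auto
    ultimately show ?thesis by (simp add: Y_def)
  qed
  have eY: "exp Y \<le> 1 + Y + (\<beta>*A1*n)^2/2 * exp (\<beta>*A1*n)"
  proof -
    have "Y^2 \<le> (\<beta>*A1*n)^2" using Yabs by (metis abs_le_square_iff abs_of_nonneg abs_ge_zero order_trans)
    moreover have "exp \<bar>Y\<bar> \<le> exp (\<beta>*A1*n)" using Yabs by simp
    ultimately have "Y^2/2 * exp \<bar>Y\<bar> \<le> (\<beta>*A1*n)^2/2 * exp (\<beta>*A1*n)"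
      by (intro mult_mono divide_right_mono) auto
    thus ?thesis using exp_taylor_abs[of Y] by linarith
  qed
  have "exp (\<theta> * (c0*(exp(d'/c0) - 1))) \<le> exp (\<theta> * (c0*(exp(d/c0)-1)) + \<beta>*hp*\<delta>0 + Y)"
    using step6 by simp
  also have "\<dots> = exp (\<theta> * (c0*(exp(d/c0)-1)) + \<beta>*hp*\<delta>0) * exp Y" by (simp add: exp_add)
  also have "\<dots> \<le> exp (\<theta> * (c0*(exp(d/c0)-1)) + \<beta>*hp*\<delta>0) *
     (1 - \<beta>*hp*(u \<bullet> cc) + \<beta>*hp/(2*r0)*n^2 + \<beta>*E0*\<alpha>/(2*c0)*n^2 + \<beta>^2*A1^2/2*n^2*exp(\<beta>*A1*n))"
  proof (rule mult_left_mono)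
    show "exp Y \<le> 1 - \<beta>*hp*(u \<bullet> cc) + \<beta>*hp/(2*r0)*n^2 + \<beta>*E0*\<alpha>/(2*c0)*n^2 + \<beta>^2*A1^2/2*n^2*exp(\<beta>*A1*n)"
      using eY Yup by (simp add: algebra_simps power_mult_distrib)
  qed simp
  finally show ?thesis by (simp add: \<beta>_def hp_def u_def r_def n_def)
qed




locale psgd = prob_space M for M :: "'w measure" +
  fixes X :: "'a::euclidean_space set" and l :: "'a \<Rightarrow> real" and grad :: "'a \<Rightarrow> 'a"
    and F :: "nat \<Rightarrow> 'w measure" and x c :: "nat \<Rightarrow> 'w \<Rightarrow> 'a"
    and a u \<gamma> \<kappa> lam B Cl :: real
  assumes X_ne: "X \<noteq> {}" and X_closed: "closed X" and X_bounded: "bounded X"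
      and X_convex: "convex X"
      and lip: "Cl-lipschitz_on X l"
      and filt: "is_filtration M F"
      and x0_meas: "x 0 \<in> borel_measurable (F 0)"
      and x0_in: "\<forall>\<omega>\<in>space M. x 0 \<omega> \<in> X"
      and c_meas: "\<forall>t. c t \<in> borel_measurable (F (Suc t))"
      and c_cond: "\<forall>t. cond_exp_eq M (F t) (c t) (\<lambda>\<omega>. grad (x t \<omega>))"
      and step: "\<forall>t. \<forall>\<omega>\<in>space M.
                   x (Suc t) \<omega> = closest_point X (x t \<omega> - (a / (u + real t) powr \<gamma>) *\<^sub>R c t \<omega>)"
      and a_pos: "a > 0" and u_pos: "u > 0" and \<gamma>_ge: "0 \<le> \<gamma>" and \<gamma>_le: "\<gamma> \<le> 1"
      and kap: "\<kappa> > 0"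
      and D1: "\<forall>y\<in>X. \<forall>ys\<in>argmin_set X l.
                 dist y ys = infdist y (argmin_set X l) \<longrightarrow>
                 grad y \<bullet> (y - ys) \<ge> \<kappa> * norm (y - ys)"
      and lam: "lam > 0" and B1: "B \<ge> 1"
      and D2: "\<forall>t. AE \<omega> in M.
                 nn_cond_exp M (F t) (\<lambda>\<omega>. ennreal (exp (lam * norm (c t \<omega>)))) \<omega> \<le> ennreal B"
begin

lemma subalg: "subalgebra M (F t)"
  using filt by (simp add: is_filtration_def)

lemma space_F[simp]: "space (F t) = space M"
  using subalg[of t] by (simp add: subalgebra_def)

lemma sfs: "sigma_finite_subalgebra M (F t)"
  by (rule finite_measure_subalgebra_is_sigma_finite)
     (simp add: finite_measure_subalgebra_def finite_measure_subalgebra_axioms_def subalg finite_measure_axioms)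

lemma sets_mono: "s \<le> t \<Longrightarrow> sets (F s) \<subseteq> sets (F t)"
  using filt by (simp add: is_filtration_def)

lemma meas_mono: "f \<in> borel_measurable (F s) \<Longrightarrow> s \<le> t \<Longrightarrow> f \<in> borel_measurable (F t)"
  using sets_mono[of s t] by (auto simp: measurable_def)

lemma meas_M: "f \<in> borel_measurable (F s) \<Longrightarrow> f \<in> borel_measurable M"
  by (rule measurable_from_subalg[OF subalg])

definition \<alpha> :: "nat \<Rightarrow> real" where "\<alpha> t = a / (u + real t) powr \<gamma>"

lemma \<alpha>_pos: "\<alpha> t > 0"
  using a_pos u_pos by (simp add: \<alpha>_def)

lemma x_meas: "x t \<in> borel_measurable (F t)"
proof (induction t)
  case 0 then show ?case using x0_meas by simp
next
  case (Suc t)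
  have cont: "continuous_on UNIV (closest_point X)"
    by (rule continuous_on_closest_point[OF X_convex X_closed X_ne])
  have m1: "x t \<in> borel_measurable (F (Suc t))" using meas_mono[OF Suc] by simp
  have m2: "c t \<in> borel_measurable (F (Suc t))" using c_meas by simp
  have "(\<lambda>\<omega>. closest_point X (x t \<omega> - \<alpha> t *\<^sub>R c t \<omega>)) \<in> borel_measurable (F (Suc t))"
    by (rule borel_measurable_continuous_on[OF cont]) (use m1 m2 in measurable)
  moreover have "\<And>\<omega>. \<omega> \<in> space (F (Suc t)) \<Longrightarrow> x (Suc t) \<omega> = closest_point X (x t \<omega> - \<alpha> t *\<^sub>R c t \<omega>)"
    using step by (simp add: \<alpha>_def)
  ultimately show ?case by (subst measurable_cong) auto
qed

lemma x_in: "\<omega> \<in> space M \<Longrightarrow> x t \<omega> \<in> X"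
proof (induction t)
  case 0 then show ?case using x0_in by simp
next
  case (Suc t) then show ?case using step closest_point_in_set[OF X_closed X_ne] by simp
qed

lemma x_step: "\<omega> \<in> space M \<Longrightarrow> x (Suc t) \<omega> = closest_point X (x t \<omega> - \<alpha> t *\<^sub>R c t \<omega>)"
  using step by (simp add: \<alpha>_def)

lemma c_measM: "c t \<in> borel_measurable M"
  using c_meas meas_M by blast

lemma c_int: "integrable M (c t)"
  using c_cond by (simp add: cond_exp_eq_def)

definition K where "K = argmin_set X l"

lemma X_compact: "compact X" using X_closed X_bounded by (simp add: compact_eq_bounded_closed)

lemma l_cont: "continuous_on X l" using lip by (rule lipschitz_on_continuous_on)

lemma K_sub: "K \<subseteq> X" by (auto simp: K_def argmin_set_def)

lemma K_ne: "K \<noteq> {}"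
  using continuous_attains_inf[OF X_compact X_ne l_cont] by (auto simp: K_def argmin_set_def)

lemma K_closed: "closed K"
proof -
  obtain x0 where x0: "x0 \<in> X" "\<forall>y\<in>X. l x0 \<le> l y"
    using continuous_attains_inf[OF X_compact X_ne l_cont] by blast
  have "K = X \<inter> l -` {..l x0}"
    using x0 by (auto simp: K_def argmin_set_def intro: order_trans)
  thus ?thesis by (simp add: continuous_closed_preimage[OF l_cont X_closed])
qed

lemma K_compact: "compact K"
  using K_closed K_sub X_compact compact_Int_closed[of X K] by (simp add: Int_absorb1)

definition DD where "DD = diameter X"

lemma DD_nonneg: "0 \<le> DD"
  using X_ne diameter_bounded_bound[OF X_bounded] by (auto simp: DD_def intro: order_trans[OF zero_le_dist])

lemma infdist_le_DD: "y \<in> X \<Longrightarrow> infdist y K \<le> DD"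
proof -
  assume y: "y \<in> X"
  obtain k where "k \<in> K" using K_ne by blast
  hence "infdist y K \<le> dist y k" by (rule infdist_le)
  also have "\<dots> \<le> DD" using \<open>k \<in> K\<close> K_sub y diameter_bounded_bound[OF X_bounded] by (auto simp: DD_def)
  finally show ?thesis .
qed

definition d :: "nat \<Rightarrow> 'w \<Rightarrow> real" where "d t \<omega> = infdist (x t \<omega>) K"

lemma d_meas: "d t \<in> borel_measurable (F t)"
proof -
  have "continuous_on UNIV (\<lambda>y. infdist y K)" by (intro continuous_intros)
  thus ?thesis unfolding d_def by (rule borel_measurable_continuous_on) (rule x_meas)
qed

lemma d_bounds: "\<omega> \<in> space M \<Longrightarrow> 0 \<le> d t \<omega> \<and> d t \<omega> \<le> DD"
  using infdist_le_DD[OF x_in] by (simp add: d_def infdist_nonneg)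

lemma d_lip: "\<omega> \<in> space M \<Longrightarrow> \<bar>d (Suc t) \<omega> - d t \<omega>\<bar> \<le> \<alpha> t * norm (c t \<omega>)"
proof -
  assume w: "\<omega> \<in> space M"
  have "\<bar>d (Suc t) \<omega> - d t \<omega>\<bar> \<le> dist (x (Suc t) \<omega>) (x t \<omega>)"
    unfolding d_def by (rule infdist_triangle_abs)
  also have "x t \<omega> = closest_point X (x t \<omega>)" using x_in[OF w] by (simp add: closest_point_self)
  also have "dist (x (Suc t) \<omega>) (closest_point X (x t \<omega>)) \<le> dist (x t \<omega> - \<alpha> t *\<^sub>R c t \<omega>) (x t \<omega>)"
    unfolding x_step[OF w] by (rule closest_point_lipschitz[OF X_convex X_closed X_ne])
  also have "\<dots> = \<alpha> t * norm (c t \<omega>)" using \<alpha>_pos[of t] by (simp add: dist_norm)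
  finally show ?thesis .
qed

lemma d_next_le: "\<omega> \<in> space M \<Longrightarrow> q \<in> K \<Longrightarrow> d (Suc t) \<omega> \<le> norm (x t \<omega> - \<alpha> t *\<^sub>R c t \<omega> - q)"
proof -
  assume w: "\<omega> \<in> space M" and q: "q \<in> K"
  have "d (Suc t) \<omega> \<le> dist (x (Suc t) \<omega>) q" unfolding d_def using q by (rule infdist_le)
  also have "q = closest_point X q" using q K_sub by (auto simp: closest_point_self)
  also have "dist (x (Suc t) \<omega>) (closest_point X q) \<le> dist (x t \<omega> - \<alpha> t *\<^sub>R c t \<omega>) q"
    unfolding x_step[OF w]
    using closest_point_lipschitz[OF X_convex X_closed X_ne, of "x t \<omega> - \<alpha> t *\<^sub>R c t \<omega>" q]
      q K_sub by (auto simp: closest_point_self)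
  finally show ?thesis by (simp add: dist_norm)
qed

end



context psgd begin

definition Gv :: "nat \<Rightarrow> 'w \<Rightarrow> 'a" where
  "Gv t \<omega> = (\<Sum>b\<in>Basis. real_cond_exp M (F t) (\<lambda>\<omega>. c t \<omega> \<bullet> b) \<omega> *\<^sub>R b)"

lemma Gv_meas: "Gv t \<in> borel_measurable (F t)"
  unfolding Gv_def by measurable

lemma Gv_inner: "Gv t \<omega> \<bullet> b = real_cond_exp M (F t) (\<lambda>\<omega>. c t \<omega> \<bullet> b) \<omega>" if "b \<in> Basis"
  using that by (simp add: Gv_def inner_sum_left inner_Basis if_distrib cong: if_cong)

lemma Gv_ae: "AE \<omega> in M. Gv t \<omega> = grad (x t \<omega>)"
proof -
  have "\<forall>b\<in>Basis. AE \<omega> in M. real_cond_exp M (F t) (\<lambda>\<omega>. c t \<omega> \<bullet> b) \<omega> = grad (x t \<omega>) \<bullet> b"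
    using c_cond by (simp add: cond_exp_eq_def)
  hence "AE \<omega> in M. \<forall>b\<in>Basis. real_cond_exp M (F t) (\<lambda>\<omega>. c t \<omega> \<bullet> b) \<omega> = grad (x t \<omega>) \<bullet> b"
    by (simp add: AE_finite_all)
  thus ?thesis
  proof (rule AE_mp, intro AE_I2 impI)
    fix \<omega> assume h: "\<forall>b\<in>Basis. real_cond_exp M (F t) (\<lambda>\<omega>. c t \<omega> \<bullet> b) \<omega> = grad (x t \<omega>) \<bullet> b"
    show "Gv t \<omega> = grad (x t \<omega>)"
      unfolding Gv_def using h by (simp add: euclidean_representation)
  qed
qed

lemma P1_scalar:
  assumes f: "f \<in> borel_measurable (F t)" and fb: "\<And>\<omega>. \<omega> \<in> space M \<Longrightarrow> \<bar>f \<omega>\<bar> \<le> Cf"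
    and b: "b \<in> Basis"
  shows "integrable M (\<lambda>\<omega>. f \<omega> * (c t \<omega> \<bullet> b))"
    "(\<integral>\<omega>. f \<omega> * (Gv t \<omega> \<bullet> b) \<partial>M) = (\<integral>\<omega>. f \<omega> * (c t \<omega> \<bullet> b) \<partial>M)"
proof -
  have ci: "integrable M (\<lambda>\<omega>. c t \<omega> \<bullet> b)" using c_int by (intro integrable_inner_left)
  have fM: "f \<in> borel_measurable M" using f by (rule meas_M)
  have cbM: "(\<lambda>\<omega>. c t \<omega> \<bullet> b) \<in> borel_measurable M" using c_measM by measurable
  show int: "integrable M (\<lambda>\<omega>. f \<omega> * (c t \<omega> \<bullet> b))"
  proof (rule Bochner_Integration.integrable_bound)
    show "integrable M (\<lambda>\<omega>. Cf * (c t \<omega> \<bullet> b))" using ci by simp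
    show "(\<lambda>\<omega>. f \<omega> * (c t \<omega> \<bullet> b)) \<in> borel_measurable M" using fM cbM by measurable
    show "AE \<omega> in M. norm (f \<omega> * (c t \<omega> \<bullet> b)) \<le> norm (Cf * (c t \<omega> \<bullet> b))"
    proof (rule AE_I2)
      fix \<omega> assume w: "\<omega> \<in> space M"
      have "\<bar>f \<omega>\<bar> \<le> \<bar>Cf\<bar>" using fb[OF w] by simp
      thus "norm (f \<omega> * (c t \<omega> \<bullet> b)) \<le> norm (Cf * (c t \<omega> \<bullet> b))"
        by (simp add: abs_mult mult_right_mono)
    qed
  qed
  have "(\<integral>\<omega>. f \<omega> * real_cond_exp M (F t) (\<lambda>\<omega>. c t \<omega> \<bullet> b) \<omega> \<partial>M) = (\<integral>\<omega>. f \<omega> * (c t \<omega> \<bullet> b) \<partial>M)"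
    by (rule sigma_finite_subalgebra.real_cond_exp_intg(2)[OF sfs int f cbM])
  thus "(\<integral>\<omega>. f \<omega> * (Gv t \<omega> \<bullet> b) \<partial>M) = (\<integral>\<omega>. f \<omega> * (c t \<omega> \<bullet> b) \<partial>M)"
    using b by (simp add: Gv_inner)
qed

lemma P1_vec:
  assumes f: "f \<in> borel_measurable (F t)" and fb: "\<And>\<omega>. \<omega> \<in> space M \<Longrightarrow> \<bar>f \<omega>\<bar> \<le> Cf"
    and v: "v \<in> borel_measurable (F t)" and vb: "\<And>\<omega>. \<omega> \<in> space M \<Longrightarrow> norm (v \<omega>) \<le> Cv"
  shows "integrable M (\<lambda>\<omega>. f \<omega> * (v \<omega> \<bullet> c t \<omega>))"
    "(\<integral>\<omega>. f \<omega> * (v \<omega> \<bullet> c t \<omega>) \<partial>M) = (\<integral>\<omega>. f \<omega> * (v \<omega> \<bullet> Gv t \<omega>) \<partial>M)"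
    "integrable M (\<lambda>\<omega>. f \<omega> * (v \<omega> \<bullet> Gv t \<omega>))"
proof -
  have fb': "\<And>\<omega>. \<omega> \<in> space M \<Longrightarrow> \<bar>f \<omega> * (v \<omega> \<bullet> b)\<bar> \<le> \<bar>Cf\<bar> * Cv" if "b \<in> Basis" for b
  proof -
    fix \<omega> assume w: "\<omega> \<in> space M"
    have "\<bar>v \<omega> \<bullet> b\<bar> \<le> Cv" using vb[OF w] Basis_le_norm[OF that, of "v \<omega>"]
      by (simp add: inner_commute)
    moreover have "\<bar>f \<omega>\<bar> \<le> \<bar>Cf\<bar>" using fb[OF w] by simp
    ultimately show "\<bar>f \<omega> * (v \<omega> \<bullet> b)\<bar> \<le> \<bar>Cf\<bar> * Cv" by (simp add: abs_mult mult_mono)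
  qed
  have fvm: "(\<lambda>\<omega>. f \<omega> * (v \<omega> \<bullet> b)) \<in> borel_measurable (F t)" for b using f v by measurable
  have eq1: "f \<omega> * (v \<omega> \<bullet> c t \<omega>) = (\<Sum>b\<in>Basis. f \<omega> * (v \<omega> \<bullet> b) * (c t \<omega> \<bullet> b))" for \<omega>
    by (simp add: euclidean_inner[of "v \<omega>" "c t \<omega>"] sum_distrib_left mult.assoc)
  have eq2: "f \<omega> * (v \<omega> \<bullet> Gv t \<omega>) = (\<Sum>b\<in>Basis. f \<omega> * (v \<omega> \<bullet> b) * (Gv t \<omega> \<bullet> b))" for \<omega>
    by (simp add: euclidean_inner[of "v \<omega>" "Gv t \<omega>"] sum_distrib_left mult.assoc)
  have ints: "\<And>b. b \<in> Basis \<Longrightarrow> integrable M (\<lambda>\<omega>. f \<omega> * (v \<omega> \<bullet> b) * (c t \<omega> \<bullet> b))"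
    using P1_scalar(1)[OF fvm fb'] by blast
  show "integrable M (\<lambda>\<omega>. f \<omega> * (v \<omega> \<bullet> c t \<omega>))"
    unfolding eq1 by (rule Bochner_Integration.integrable_sum) (rule ints)
  have intG: "\<And>b. b \<in> Basis \<Longrightarrow> integrable M (\<lambda>\<omega>. f \<omega> * (v \<omega> \<bullet> b) * (Gv t \<omega> \<bullet> b))"
    proof -
      fix b :: 'a assume b: "b \<in> Basis"
      have "integrable M (\<lambda>\<omega>. f \<omega> * (v \<omega> \<bullet> b) * real_cond_exp M (F t) (\<lambda>\<omega>. c t \<omega> \<bullet> b) \<omega>)"
        by (rule sigma_finite_subalgebra.real_cond_exp_intg(1)[OF sfs ints[OF b] fvm])
           (use c_measM in measurable)
      thus "integrable M (\<lambda>\<omega>. f \<omega> * (v \<omega> \<bullet> b) * (Gv t \<omega> \<bullet> b))" using b by (simp add: Gv_inner)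
    qed
  show "integrable M (\<lambda>\<omega>. f \<omega> * (v \<omega> \<bullet> Gv t \<omega>))"
    unfolding eq2 by (rule Bochner_Integration.integrable_sum) (rule intG)
  have "(\<integral>\<omega>. f \<omega> * (v \<omega> \<bullet> c t \<omega>) \<partial>M) = (\<Sum>b\<in>Basis. \<integral>\<omega>. f \<omega> * (v \<omega> \<bullet> b) * (c t \<omega> \<bullet> b) \<partial>M)"
    unfolding eq1 by (rule Bochner_Integration.integral_sum) (rule ints)
  also have "\<dots> = (\<Sum>b\<in>Basis. \<integral>\<omega>. f \<omega> * (v \<omega> \<bullet> b) * (Gv t \<omega> \<bullet> b) \<partial>M)"
    by (intro sum.cong refl P1_scalar(2)[OF fvm fb', symmetric])
  also have "\<dots> = (\<integral>\<omega>. f \<omega> * (v \<omega> \<bullet> Gv t \<omega>) \<partial>M)"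
    unfolding eq2 by (intro Bochner_Integration.integral_sum[symmetric] intG)
  finally show "(\<integral>\<omega>. f \<omega> * (v \<omega> \<bullet> c t \<omega>) \<partial>M) = (\<integral>\<omega>. f \<omega> * (v \<omega> \<bullet> Gv t \<omega>) \<partial>M)" .
qed

lemma expc_meas: "(\<lambda>\<omega>. exp (lam * norm (c t \<omega>))) \<in> borel_measurable M"
  using c_measM[of t] by measurable

lemma expc_meas': "(\<lambda>\<omega>. ennreal (exp (lam * norm (c t \<omega>)))) \<in> borel_measurable M"
  using expc_meas[of t] by measurable

lemma P2_nn:
  assumes f: "f \<in> borel_measurable (F t)"
  shows "(\<integral>\<^sup>+\<omega>. f \<omega> * ennreal (exp (lam * norm (c t \<omega>))) \<partial>M) \<le> ennreal B * (\<integral>\<^sup>+\<omega>. f \<omega> \<partial>M)"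
proof -
  have gm: "(\<lambda>\<omega>. ennreal (exp (lam * norm (c t \<omega>)))) \<in> borel_measurable M" using c_measM by measurable
  have "(\<integral>\<^sup>+\<omega>. f \<omega> * ennreal (exp (lam * norm (c t \<omega>))) \<partial>M)
      = (\<integral>\<^sup>+\<omega>. f \<omega> * nn_cond_exp M (F t) (\<lambda>\<omega>. ennreal (exp (lam * norm (c t \<omega>)))) \<omega> \<partial>M)"
    by (rule sigma_finite_subalgebra.nn_cond_exp_intg[OF sfs f gm, symmetric])
  also have "\<dots> \<le> (\<integral>\<^sup>+\<omega>. f \<omega> * ennreal B \<partial>M)"
  proof (rule nn_integral_mono_AE)
    show "AE \<omega> in M. f \<omega> * nn_cond_exp M (F t) (\<lambda>\<omega>. ennreal (exp (lam * norm (c t \<omega>)))) \<omega> \<le> f \<omega> * ennreal B"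
      using D2[rule_format, of t] by eventually_elim (rule mult_left_mono, auto)
  qed
  also have "\<dots> = ennreal B * (\<integral>\<^sup>+\<omega>. f \<omega> \<partial>M)"
    using f meas_M by (subst nn_integral_multc) (auto simp: mult.commute)
  finally show ?thesis .
qed

lemma P2:
  assumes f: "f \<in> borel_measurable (F t)" and fb: "\<And>\<omega>. \<omega> \<in> space M \<Longrightarrow> 0 \<le> f \<omega> \<and> f \<omega> \<le> Cf"
    and Z: "Z \<in> borel_measurable M"
    and Zb: "\<And>\<omega>. \<omega> \<in> space M \<Longrightarrow> 0 \<le> Z \<omega> \<and> Z \<omega> \<le> Kz * exp (lam * norm (c t \<omega>))"
  shows "integrable M (\<lambda>\<omega>. f \<omega> * Z \<omega>)" "(\<integral>\<omega>. f \<omega> * Z \<omega> \<partial>M) \<le> Kz * B * (\<integral>\<omega>. f \<omega> \<partial>M)"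
proof -
  have fM: "f \<in> borel_measurable M" using f by (rule meas_M)
  have Kz: "0 \<le> Kz"
  proof -
    obtain \<omega> where w: "\<omega> \<in> space M" using not_empty by blast
    have "0 \<le> Kz * exp (lam * norm (c t \<omega>))" using Zb[OF w] by linarith
    thus ?thesis by (simp add: zero_le_mult_iff)
  qed
  have fint: "integrable M f"
    by (rule integrable_const_bound[where B=Cf]) (use fb fM in \<open>auto intro!: AE_I2\<close>)
  have fm': "(\<lambda>\<omega>. ennreal (f \<omega>)) \<in> borel_measurable (F t)" using f by measurable
  have "(\<integral>\<^sup>+\<omega>. ennreal (f \<omega> * Z \<omega>) \<partial>M) \<le> (\<integral>\<^sup>+\<omega>. ennreal Kz * (ennreal (f \<omega>) * ennreal (exp (lam * norm (c t \<omega>)))) \<partial>M)"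
  proof (rule nn_integral_mono)
    fix \<omega> assume w: "\<omega> \<in> space M"
    have "f \<omega> * Z \<omega> \<le> Kz * (f \<omega> * exp (lam * norm (c t \<omega>)))"
    proof -
      have "f \<omega> * Z \<omega> \<le> f \<omega> * (Kz * exp (lam * norm (c t \<omega>)))"
        using fb[OF w] Zb[OF w] by (intro mult_left_mono) auto
      thus ?thesis by (simp add: mult_ac)
    qed
    thus "ennreal (f \<omega> * Z \<omega>) \<le> ennreal Kz * (ennreal (f \<omega>) * ennreal (exp (lam * norm (c t \<omega>))))"
      using fb[OF w] Kz by (simp add: ennreal_mult[symmetric] ennreal_leI)
  qed
  also have "\<dots> = ennreal Kz * (\<integral>\<^sup>+\<omega>. ennreal (f \<omega>) * ennreal (exp (lam * norm (c t \<omega>))) \<partial>M)"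
    using fM expc_meas'[of t] by (intro nn_integral_cmult) measurable
  also have "\<dots> \<le> ennreal Kz * (ennreal B * (\<integral>\<^sup>+\<omega>. ennreal (f \<omega>) \<partial>M))"
    by (intro mult_left_mono P2_nn fm') simp
  also have "(\<integral>\<^sup>+\<omega>. ennreal (f \<omega>) \<partial>M) = ennreal (\<integral>\<omega>. f \<omega> \<partial>M)"
    using fint fb by (intro nn_integral_eq_integral) (auto intro!: AE_I2)
  also have "ennreal Kz * (ennreal B * ennreal (\<integral>\<omega>. f \<omega> \<partial>M)) = ennreal (Kz * B * (\<integral>\<omega>. f \<omega> \<partial>M))"
  proof -
    have fi0: "0 \<le> (\<integral>\<omega>. f \<omega> \<partial>M)" using fb by (intro integral_nonneg_AE) (simp add: AE_I2)
    have "ennreal (Kz * B * (\<integral>\<omega>. f \<omega> \<partial>M)) = ennreal (Kz * B) * ennreal (\<integral>\<omega>. f \<omega> \<partial>M)"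
      using Kz B1 fi0 by (intro ennreal_mult) auto
    also have "ennreal (Kz * B) = ennreal Kz * ennreal B" using Kz B1 by (intro ennreal_mult) auto
    finally have "ennreal (Kz * B * (\<integral>\<omega>. f \<omega> \<partial>M)) = ennreal Kz * ennreal B * ennreal (\<integral>\<omega>. f \<omega> \<partial>M)" .
    thus ?thesis by (simp only: mult.assoc)
  qed
  finally have nnb: "(\<integral>\<^sup>+\<omega>. ennreal (f \<omega> * Z \<omega>) \<partial>M) \<le> ennreal (Kz * B * (\<integral>\<omega>. f \<omega> \<partial>M))" .
  have fZm: "(\<lambda>\<omega>. f \<omega> * Z \<omega>) \<in> borel_measurable M" using fM Z by measurable
  have nn0: "\<And>\<omega>. \<omega> \<in> space M \<Longrightarrow> 0 \<le> f \<omega> * Z \<omega>" using fb Zb by simp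
  show int: "integrable M (\<lambda>\<omega>. f \<omega> * Z \<omega>)"
  proof (rule integrableI_bounded[OF fZm])
    have "(\<integral>\<^sup>+\<omega>. ennreal (norm (f \<omega> * Z \<omega>)) \<partial>M) = (\<integral>\<^sup>+\<omega>. ennreal (f \<omega> * Z \<omega>) \<partial>M)"
      using nn0 by (intro nn_integral_cong) simp
    also have "\<dots> \<le> ennreal (Kz * B * (\<integral>\<omega>. f \<omega> \<partial>M))" by (rule nnb)
    also have "\<dots> < \<infinity>" by simp
    finally show "(\<integral>\<^sup>+\<omega>. ennreal (norm (f \<omega> * Z \<omega>)) \<partial>M) < \<infinity>" .
  qed
  have "ennreal (\<integral>\<omega>. f \<omega> * Z \<omega> \<partial>M) = (\<integral>\<^sup>+\<omega>. ennreal (f \<omega> * Z \<omega>) \<partial>M)"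
    using int nn0 by (intro nn_integral_eq_integral[symmetric]) (auto intro!: AE_I2)
  also note nnb
  finally have fin: "ennreal (\<integral>\<omega>. f \<omega> * Z \<omega> \<partial>M) \<le> ennreal (Kz * B * (\<integral>\<omega>. f \<omega> \<partial>M))" .
  have fi0: "0 \<le> (\<integral>\<omega>. f \<omega> \<partial>M)" using fb by (intro integral_nonneg_AE) (simp add: AE_I2)
  have R0: "0 \<le> Kz * B * (\<integral>\<omega>. f \<omega> \<partial>M)" using Kz B1 fi0 by (intro mult_nonneg_nonneg) auto
  show "(\<integral>\<omega>. f \<omega> * Z \<omega> \<partial>M) \<le> Kz * B * (\<integral>\<omega>. f \<omega> \<partial>M)"
    using fin by (subst (asm) ennreal_le_iff[OF R0])
qed

end



context psgd begin

definition mm where "mm = 8*B/lam^2"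
definition c0 where "c0 = a*\<kappa>/8"
definition E0 where "E0 = exp (DD/c0)"
definition A1 where "A1 = E0 + E0*DD/(2*c0)"
definition r0 where "r0 = 4*mm/\<kappa>"
definition RR where "RR = 1 + 1/min u 1"
definition \<eta> where "\<eta> = min (lam/(2*RR*A1)) (\<kappa>/(8*RR*A1^2*mm))"
definition \<delta>0 where "\<delta>0 = \<kappa>/32"
definition \<theta> where "\<theta> s = \<eta> * (u + real s) powr \<gamma> / a"
definition hh where "hh z = c0*(exp(z/c0) - 1)"
definition V where "V s \<omega> = exp (\<theta> s * hh (d s \<omega>))"
definition qf where "qf = exp (-(3*\<eta>*\<kappa>/32))"
definition C0 where "C0 = exp (E0*\<eta>*RR*r0) * B"

lemma mm_pos: "mm > 0" using lam B1 by (simp add: mm_def)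
lemma c0_pos: "c0 > 0" using a_pos kap by (simp add: c0_def)
lemma E0_ge1: "E0 \<ge> 1" using DD_nonneg c0_pos by (simp add: E0_def)
lemma A1_ge: "A1 \<ge> E0" using DD_nonneg c0_pos E0_ge1 by (simp add: A1_def)
lemma r0_pos: "r0 > 0" using mm_pos kap by (simp add: r0_def)
lemma RR_ge1: "RR \<ge> 1" using u_pos by (simp add: RR_def)
lemma eta_pos: "\<eta> > 0"
  using lam kap RR_ge1 A1_ge E0_ge1 mm_pos by (simp add: \<eta>_def)
lemma eta1: "\<eta>*RR*A1 \<le> lam/2"
proof -
  have "\<eta> \<le> lam/(2*RR*A1)" by (simp add: \<eta>_def)
  hence "\<eta>*(RR*A1) \<le> lam/(2*RR*A1)*(RR*A1)" using RR_ge1 A1_ge E0_ge1 by (intro mult_right_mono) auto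
  thus ?thesis using RR_ge1 A1_ge E0_ge1 by (simp add: field_simps)
qed
lemma eta2: "\<eta>*RR*A1^2*mm/2 \<le> \<kappa>/16"
proof -
  have "\<eta> \<le> \<kappa>/(8*RR*A1^2*mm)" by (simp add: \<eta>_def)
  hence "\<eta>*(RR*A1^2*mm) \<le> \<kappa>/(8*RR*A1^2*mm)*(RR*A1^2*mm)" using RR_ge1 A1_ge E0_ge1 mm_pos
    by (intro mult_right_mono) auto
  thus ?thesis using RR_ge1 A1_ge E0_ge1 mm_pos by (simp add: field_simps)
qed
lemma eta3: "E0*\<eta>*RR \<le> lam"
proof -
  have "E0*\<eta>*RR \<le> A1*\<eta>*RR" using A1_ge eta_pos RR_ge1 by (intro mult_right_mono) auto
  thus ?thesis using eta1 lam by (simp add: mult_ac)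
qed
lemma mm_r0: "mm/(2*r0) = \<kappa>/8" using mm_pos kap by (simp add: r0_def field_simps)
lemma delta0_pos: "\<delta>0 > 0" using kap by (simp add: \<delta>0_def)
lemma qf_lt1: "qf < 1" using eta_pos kap by (simp add: qf_def)
lemma qf_pos: "qf > 0" by (simp add: qf_def)
lemma C0_pos: "C0 > 0" using B1 by (simp add: C0_def)

lemma upos: "u + real s > 0" using u_pos by simp

lemma powr_lower: "(u + real s) powr \<gamma> \<ge> min u 1"
proof (cases "u + real s \<ge> 1")
  case True
  hence "1 \<le> (u + real s) powr \<gamma>" using \<gamma>_ge by (simp add: ge_one_powr_ge_zero)
  thus ?thesis by simp
next
  case False
  hence "(u + real s) powr 1 \<le> (u + real s) powr \<gamma>" using \<gamma>_le upos[of s]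
    by (intro powr_mono') auto
  thus ?thesis using upos[of s] by simp
qed

lemma theta_alpha: "\<theta> (Suc s) * \<alpha> s = \<eta> * (u + real s + 1) powr \<gamma> / (u + real s) powr \<gamma>"
  using a_pos upos[of s] by (simp add: \<theta>_def \<alpha>_def ac_simps)

lemma beta_ge: "\<eta> \<le> \<theta> (Suc s) * \<alpha> s"
proof -
  have "(u + real s) powr \<gamma> \<le> (u + real s + 1) powr \<gamma>" using \<gamma>_ge upos[of s] by (intro powr_mono2) auto
  hence "1 \<le> (u + real s + 1) powr \<gamma> / (u + real s) powr \<gamma>" using upos[of s] by simp
  hence "\<eta> * 1 \<le> \<eta> * ((u + real s + 1) powr \<gamma> / (u + real s) powr \<gamma>)" using eta_pos by (intro mult_left_mono) auto
  thus ?thesis by (simp add: theta_alpha)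
qed

lemma beta_le: "\<theta> (Suc s) * \<alpha> s \<le> \<eta>*RR"
proof -
  have p: "(u + real s) powr \<gamma> > 0" using upos[of s] by simp
  have "(u + real s + 1) powr \<gamma> \<le> (u + real s) powr \<gamma> + 1"
    using powr_subadd1[of "u + real s" \<gamma>] upos[of s] \<gamma>_ge \<gamma>_le by simp
  hence "(u + real s + 1) powr \<gamma> / (u + real s) powr \<gamma> \<le> 1 + 1/(u + real s) powr \<gamma>"
    using p by (simp add: field_simps)
  also have "1/(u + real s) powr \<gamma> \<le> 1/min u 1" using powr_lower[of s] u_pos by (intro divide_left_mono) auto
  finally have "(u + real s + 1) powr \<gamma> / (u + real s) powr \<gamma> \<le> RR" by (simp add: RR_def)
  hence "\<eta> * ((u + real s + 1) powr \<gamma> / (u + real s) powr \<gamma>) \<le> \<eta> * RR" using eta_pos by (intro mult_left_mono) auto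
  thus ?thesis by (simp add: theta_alpha)
qed

lemma theta_growth: "\<theta> (Suc s) - \<theta> s \<le> \<eta>/a"
proof -
  have "(u + real s + 1) powr \<gamma> \<le> (u + real s) powr \<gamma> + 1"
    using powr_subadd1[of "u + real s" \<gamma>] upos[of s] \<gamma>_ge \<gamma>_le by simp
  hence "\<eta> * (u + real s + 1) powr \<gamma> \<le> \<eta> * ((u + real s) powr \<gamma> + 1)" using eta_pos by (intro mult_left_mono) auto
  hence le: "\<eta> * (u + real s + 1) powr \<gamma> - \<eta> * (u + real s) powr \<gamma> \<le> \<eta>" by (simp add: algebra_simps)
  have e: "\<theta> (Suc s) - \<theta> s = (\<eta> * (u + real s + 1) powr \<gamma> - \<eta> * (u + real s) powr \<gamma>)/a"
    by (simp add: \<theta>_def diff_divide_distrib ac_simps)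
  show ?thesis unfolding e using le a_pos by (simp add: divide_right_mono)
qed

lemma theta_pos: "\<theta> s > 0" using eta_pos a_pos upos[of s] by (simp add: \<theta>_def)

lemma theta_mono: "s \<le> t \<Longrightarrow> \<theta> s \<le> \<theta> t"
proof -
  assume "s \<le> t"
  hence "(u + real s) powr \<gamma> \<le> (u + real t) powr \<gamma>" using \<gamma>_ge upos[of s] by (intro powr_mono2) auto
  hence "\<eta> * (u + real s) powr \<gamma> \<le> \<eta> * (u + real t) powr \<gamma>" using eta_pos by (intro mult_left_mono) auto
  thus ?thesis using a_pos by (simp add: \<theta>_def divide_right_mono)
qed

lemma S0_exists:
  assumes g: "\<gamma> > 0"
  shows "\<exists>S0. \<forall>s\<ge>S0. \<alpha> s * E0 * mm / (2*c0) \<le> \<kappa>/16"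
proof -
  define Z where "Z = 8*E0*mm*a/(c0*\<kappa>)"
  have Z: "Z > 0" using E0_ge1 mm_pos a_pos c0_pos kap by (simp add: Z_def)
  define S0 where "S0 = nat \<lceil>Z powr (1/\<gamma>)\<rceil>"
  have "\<forall>s\<ge>S0. \<alpha> s * E0 * mm / (2*c0) \<le> \<kappa>/16"
  proof (intro allI impI)
    fix s assume s: "s \<ge> S0"
    have "Z powr (1/\<gamma>) \<le> real S0" by (simp add: S0_def)
    also have "\<dots> \<le> u + real s" using s u_pos by simp
    finally have "(Z powr (1/\<gamma>)) powr \<gamma> \<le> (u + real s) powr \<gamma>" using g by (intro powr_mono2) auto
    hence Zle: "Z \<le> (u + real s) powr \<gamma>" using g Z by (simp add: powr_powr)
    have "0 < (u + real s) powr \<gamma> * Z" using Zle Z by (intro mult_pos_pos) auto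
    hence "\<alpha> s \<le> a / Z" unfolding \<alpha>_def using Zle Z a_pos by (intro divide_left_mono) auto
    hence "\<alpha> s * (E0 * mm / (2*c0)) \<le> a / Z * (E0 * mm / (2*c0))"
      using E0_ge1 mm_pos c0_pos by (intro mult_right_mono) auto
    also have "\<dots> = \<kappa>/16" using Z E0_ge1 mm_pos c0_pos kap a_pos by (simp add: Z_def field_simps)
    finally show "\<alpha> s * E0 * mm / (2*c0) \<le> \<kappa>/16" by (simp add: mult_ac)
  qed
  thus ?thesis by blast
qed

lemma hh_mono: "z \<le> z' \<Longrightarrow> hh z \<le> hh z'"
  using c0_pos by (simp add: hh_def divide_right_mono)

lemma hh_ge: "0 \<le> z \<Longrightarrow> z \<le> hh z"
proof -
  assume z: "0 \<le> z"
  have "1 + z/c0 \<le> exp (z/c0)" by (rule exp_ge_add_one_self)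
  hence "c0 * (1 + z/c0) \<le> c0 * exp (z/c0)" using c0_pos by simp
  thus ?thesis using c0_pos by (simp add: hh_def algebra_simps)
qed

lemma hh_le: "0 \<le> z \<Longrightarrow> hh z \<le> c0 * exp (z/c0)"
  by (simp add: hh_def algebra_simps c0_pos less_imp_le)

lemma hh_le2: "0 \<le> z \<Longrightarrow> z \<le> DD \<Longrightarrow> hh z \<le> E0 * z"
proof -
  assume z: "0 \<le> z" "z \<le> DD"
  have "exp (z/c0) - 1 \<le> (z/c0) * exp (z/c0)"
  proof -
    have "1 - z/c0 \<le> exp (-(z/c0))" using exp_ge_add_one_self[of "-(z/c0)"] by simp
    hence "(1 - z/c0) * exp (z/c0) \<le> exp (-(z/c0)) * exp (z/c0)" by (intro mult_right_mono) auto
    thus ?thesis by (simp add: exp_minus field_simps)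
  qed
  hence "c0*(exp (z/c0) - 1) \<le> c0*((z/c0) * exp (z/c0))" using c0_pos by (intro mult_left_mono) auto
  also have "\<dots> = z * exp (z/c0)" using c0_pos by simp
  also have "\<dots> \<le> z * E0" using z c0_pos by (intro mult_left_mono) (auto simp: E0_def divide_right_mono)
  finally show ?thesis by (simp add: hh_def mult.commute)
qed

lemma hh_nonneg: "0 \<le> z \<Longrightarrow> 0 \<le> hh z"
  using hh_ge by force

lemma V_meas: "V s \<in> borel_measurable (F s)"
  unfolding V_def hh_def using d_meas[of s] by measurable

lemma V_bounds: "\<omega> \<in> space M \<Longrightarrow> 0 < V s \<omega> \<and> V s \<omega> \<le> exp (\<theta> s * hh DD)"
  using d_bounds[of \<omega> s] theta_pos[of s] hh_mono by (simp add: V_def mult_left_mono)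

lemma V_int: "integrable M (V s)"
  by (rule integrable_const_bound[where B="exp (\<theta> s * hh DD)"])
     (use V_bounds V_meas[of s] meas_M in \<open>auto intro!: AE_I2 simp: less_imp_le\<close>)

definition Tq where "Tq = (SOME T. countable T \<and> T \<subseteq> K \<and> K \<subseteq> closure T)"

lemma Tq: "countable Tq" "Tq \<subseteq> K" "K \<subseteq> closure Tq"
proof -
  obtain T where "countable T" "T \<subseteq> K" "K \<subseteq> closure T" by (rule separable)
  hence "\<exists>T. countable T \<and> T \<subseteq> K \<and> K \<subseteq> closure T" by blast
  hence "countable Tq \<and> Tq \<subseteq> K \<and> K \<subseteq> closure Tq" unfolding Tq_def by (rule someI_ex)
  thus "countable Tq" "Tq \<subseteq> K" "K \<subseteq> closure Tq" by auto
qed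

lemma Tq_ne: "Tq \<noteq> {}" using Tq(3) K_ne by auto

definition qq where "qq = from_nat_into Tq"

lemma qq_in: "qq k \<in> K" using from_nat_into[OF Tq_ne] Tq(2) by (auto simp: qq_def)

definition Psel where "Psel s \<omega> k \<longleftrightarrow> dist (x s \<omega>) (qq k) < d s \<omega> + \<alpha> s * \<delta>0 \<and>
   \<kappa> * dist (x s \<omega>) (qq k) - \<kappa>*(\<alpha> s*r0)/2 < Gv s \<omega> \<bullet> (x s \<omega> - qq k)"
definition idx where "idx s \<omega> = (LEAST k. Psel s \<omega> k)"
definition qs where "qs s \<omega> = qq (idx s \<omega>)"

lemma Psel_meas: "Measurable.pred (F s) (\<lambda>\<omega>. Psel s \<omega> k)"
  unfolding Psel_def using x_meas[of s] d_meas[of s] Gv_meas[of s] by measurable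

lemma qs_meas: "qs s \<in> borel_measurable (F s)"
proof -
  have "(\<lambda>\<omega>. idx s \<omega>) \<in> measurable (F s) (count_space UNIV)"
    unfolding idx_def by (rule measurable_Least) (rule Psel_meas)
  moreover have "qq \<in> measurable (count_space UNIV) borel" by simp
  ultimately show ?thesis unfolding qs_def by (rule measurable_compose)
qed

lemma qs_in: "qs s \<omega> \<in> K" by (simp add: qs_def qq_in)

lemma Psel_idx: "\<exists>k. Psel s \<omega> k \<Longrightarrow> Psel s \<omega> (idx s \<omega>)"
  unfolding idx_def by (rule LeastI_ex)

lemma exists_Psel:
  assumes w: "\<omega> \<in> space M" and g: "Gv s \<omega> = grad (x s \<omega>)"
  shows "\<exists>k. Psel s \<omega> k"
proof -
  define y where "y = x s \<omega>"
  have y: "y \<in> X" using x_in[OF w] by (simp add: y_def)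
  obtain p where p: "p \<in> K" "infdist y K = dist y p"
    using infdist_attains_inf[OF K_closed K_ne] by blast
  have D1p: "grad y \<bullet> (y - p) \<ge> \<kappa> * norm (y - p)"
    using D1 y p by (auto simp: K_def)
  define Op where "Op = {z. dist y z < d s \<omega> + \<alpha> s * \<delta>0 \<and> \<kappa> * dist y z - \<kappa>*(\<alpha> s*r0)/2 < Gv s \<omega> \<bullet> (y - z)}"
  have "open Op" unfolding Op_def by (intro open_Collect_conj open_Collect_less continuous_intros)
  moreover have "p \<in> Op"
  proof -
    have "dist y p < d s \<omega> + \<alpha> s * \<delta>0" using p \<alpha>_pos[of s] delta0_pos by (simp add: d_def y_def)
    moreover have "\<kappa> * dist y p - \<kappa>*(\<alpha> s*r0)/2 < Gv s \<omega> \<bullet> (y - p)"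
    proof -
      have "0 < \<kappa>*(\<alpha> s*r0)/2" using kap \<alpha>_pos[of s] r0_pos by simp
      thus ?thesis using D1p g by (simp add: y_def dist_norm)
    qed
    ultimately show ?thesis by (simp add: Op_def)
  qed
  moreover have "p \<in> closure Tq" using p Tq(3) by auto
  ultimately obtain z where z: "z \<in> Tq" "z \<in> Op"
    using closure_iff_nhds_not_empty[of p Tq] by blast
  obtain k where "qq k = z" using from_nat_into_surj[OF Tq(1) z(1)] by (auto simp: qq_def)
  hence "Psel s \<omega> k" using z(2) by (simp add: Op_def Psel_def y_def)
  thus ?thesis by blast
qed

lemma ae_Psel: "AE \<omega> in M. \<exists>k. Psel s \<omega> k"
proof -
  from Gv_ae[of s] show ?thesis
  proof (rule AE_mp, intro AE_I2 impI)
    fix \<omega> assume "\<omega> \<in> space M" "Gv s \<omega> = grad (x s \<omega>)"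
    thus "\<exists>k. Psel s \<omega> k" by (rule exists_Psel)
  qed
qed

end



context psgd begin

lemma sq_exp_bound:
  assumes n: "0 \<le> n" and mu: "0 \<le> \<mu>" "\<mu> \<le> lam/2"
  shows "n^2 * exp (\<mu>*n) \<le> 8/lam^2 * exp (lam*n)"
proof -
  have x: "0 \<le> lam*n/2" using lam n by simp
  have "(lam*n/2)^2/2 \<le> exp (lam*n/2)"
  proof -
    have "1 + lam*n/2 + (lam*n/2)^2/2 \<le> exp (lam*n/2)" using exp_lower_Taylor_quadratic[OF x] .
    thus ?thesis using x by linarith
  qed
  hence "n^2 \<le> 8/lam^2 * exp (lam*n/2)" using lam by (simp add: field_simps power2_eq_square)
  moreover have "exp (\<mu>*n) \<le> exp (lam*n/2)"
  proof -
    have "\<mu>*n \<le> (lam/2)*n" using mu n by (intro mult_right_mono) auto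
    thus ?thesis by simp
  qed
  ultimately have "n^2 * exp (\<mu>*n) \<le> 8/lam^2 * exp (lam*n/2) * exp (lam*n/2)"
    by (intro mult_mono) auto
  also have "\<dots> = 8/lam^2 * exp (lam*n)" by (simp add: mult.assoc flip: exp_add)
  finally show ?thesis .
qed

lemma expc_int: "integrable M (\<lambda>\<omega>. exp (lam * norm (c t \<omega>)))"
  and expc_int_le: "(\<integral>\<omega>. exp (lam * norm (c t \<omega>)) \<partial>M) \<le> B"
proof -
  have f: "(\<lambda>\<omega>. 1::real) \<in> borel_measurable (F t)" by simp
  have "integrable M (\<lambda>\<omega>. 1 * exp (lam * norm (c t \<omega>)))"
    "(\<integral>\<omega>. 1 * exp (lam * norm (c t \<omega>)) \<partial>M) \<le> 1 * B * (\<integral>\<omega>. 1 \<partial>M)"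
    by (rule P2[OF f _ expc_meas, where Cf=1 and Kz=1]; simp)+
  thus "integrable M (\<lambda>\<omega>. exp (lam * norm (c t \<omega>)))" "(\<integral>\<omega>. exp (lam * norm (c t \<omega>)) \<partial>M) \<le> B"
    by (simp_all add: prob_space)
qed

end



context psgd begin

lemma bnd_int: fixes f :: "'w \<Rightarrow> real" shows "f \<in> borel_measurable (F s) \<Longrightarrow> (\<And>\<omega>. \<omega> \<in> space M \<Longrightarrow> \<bar>f \<omega>\<bar> \<le> C) \<Longrightarrow> integrable M f"
  by (rule integrable_const_bound[where B=C]) (auto intro!: AE_I2 simp: meas_M)

lemma one_step:
  assumes S: "\<alpha> s * E0 * mm / (2*c0) \<le> \<kappa>/16"
  shows "(\<integral>\<omega>. V (Suc s) \<omega> \<partial>M) \<le> qf * (\<integral>\<omega>. V s \<omega> \<partial>M) + C0"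
proof -
  define al where "al = \<alpha> s"
  define th where "th = \<theta> (Suc s)"
  define \<beta> where "\<beta> = th * al"
  have al: "al > 0" using \<alpha>_pos by (simp add: al_def)
  have th: "th > 0" using theta_pos by (simp add: th_def)
  have bge: "\<eta> \<le> \<beta>" using beta_ge by (simp add: \<beta>_def th_def al_def)
  have ble: "\<beta> \<le> \<eta>*RR" using beta_le by (simp add: \<beta>_def th_def al_def)
  have bpos: "\<beta> > 0" using bge eta_pos by simp
  note [measurable] = d_meas[of s] x_meas[of s] Gv_meas[of s] qs_meas[of s] Psel_meas
  define far where "far = {\<omega> \<in> space M. al*r0 \<le> d s \<omega> \<and> (\<exists>k. Psel s \<omega> k)}"
  have far_sets[measurable]: "far \<in> sets (F s)"
  proof -
    have "far = {\<omega> \<in> space (F s). al*r0 \<le> d s \<omega> \<and> (\<exists>k. Psel s \<omega> k)}" by (simp add: far_def)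
    also have "\<dots> \<in> sets (F s)" by measurable
    finally show ?thesis .
  qed
  define hp where "hp \<omega> = exp (d s \<omega> / c0)" for \<omega>
  define Wf where "Wf \<omega> = indicator far \<omega> * exp (th * hh (d s \<omega>) + \<beta> * hp \<omega> * \<delta>0)" for \<omega>
  define uv where "uv \<omega> = (1/norm (x s \<omega> - qs s \<omega>)) *\<^sub>R (x s \<omega> - qs s \<omega>)" for \<omega>
  define nc where "nc \<omega> = norm (c s \<omega>)" for \<omega>
  define Wmax where "Wmax = exp (th * hh DD + \<beta> * E0 * \<delta>0)"
  have hp_m[measurable]: "hp \<in> borel_measurable (F s)" unfolding hp_def by measurable
  have Wf_m[measurable]: "Wf \<in> borel_measurable (F s)" unfolding Wf_def hh_def by measurable
  have uv_m[measurable]: "uv \<in> borel_measurable (F s)" unfolding uv_def by measurable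
  have nc_m[measurable]: "nc \<in> borel_measurable M" unfolding nc_def using c_measM[of s] by measurable
  have hp_b: "1 \<le> hp \<omega> \<and> hp \<omega> \<le> E0" if w: "\<omega> \<in> space M" for \<omega>
    using d_bounds[OF w, of s] c0_pos by (simp add: hp_def E0_def divide_right_mono)
  have Wf_b: "0 \<le> Wf \<omega> \<and> Wf \<omega> \<le> Wmax" if w: "\<omega> \<in> space M" for \<omega>
  proof -
    have "th * hh (d s \<omega>) \<le> th * hh DD" using d_bounds[OF w, of s] th hh_mono by (simp add: mult_left_mono)
    moreover have "\<beta> * hp \<omega> * \<delta>0 \<le> \<beta> * E0 * \<delta>0"
      using hp_b[OF w] bpos delta0_pos by (intro mult_right_mono mult_left_mono) auto
    ultimately have "exp (th * hh (d s \<omega>) + \<beta> * hp \<omega> * \<delta>0) \<le> Wmax" by (simp add: Wmax_def)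
    moreover have "0 \<le> Wmax" by (simp add: Wmax_def)
    ultimately show ?thesis by (auto simp: Wf_def indicator_def)
  qed
  have uv_b: "norm (uv \<omega>) \<le> 1" for \<omega>
    by (cases "x s \<omega> - qs s \<omega> = 0") (simp_all add: uv_def)
  define Br where "Br \<omega> = 1 - \<beta>*hp \<omega>*(uv \<omega> \<bullet> c s \<omega>) + \<beta>*hp \<omega>/(2*r0)*(nc \<omega>)^2
       + \<beta>*E0*al/(2*c0)*(nc \<omega>)^2 + \<beta>^2*A1^2/2*(nc \<omega>)^2*exp(\<beta>*A1*nc \<omega>)" for \<omega>
  have pw: "V (Suc s) \<omega> \<le> Wf \<omega> * Br \<omega> + exp (E0*\<beta>*r0) * exp (lam * nc \<omega>)"
    if w: "\<omega> \<in> space M" and ex: "\<exists>k. Psel s \<omega> k" for \<omega>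
  proof (cases "al*r0 \<le> d s \<omega>")
    case True
    hence wf: "\<omega> \<in> far" using w ex by (simp add: far_def)
    have ps: "Psel s \<omega> (idx s \<omega>)" using Psel_idx[OF ex] .
    have qK: "qs s \<omega> \<in> K" by (rule qs_in)
    have kp: "exp (th * (c0*(exp(d (Suc s) \<omega>/c0) - 1))) \<le> exp (th * (c0*(exp(d s \<omega>/c0)-1)) + (th*al)*exp (d s \<omega>/c0)*\<delta>0) *
      (1 - (th*al)*exp (d s \<omega>/c0)*(((1/norm (x s \<omega>-qs s \<omega>)) *\<^sub>R (x s \<omega>-qs s \<omega>)) \<bullet> c s \<omega>) + (th*al)*exp (d s \<omega>/c0)/(2*r0)*(norm (c s \<omega>))^2
       + (th*al)*E0*al/(2*c0)*(norm (c s \<omega>))^2 + (th*al)^2*A1^2/2*(norm (c s \<omega>))^2*exp((th*al)*A1*norm (c s \<omega>)))"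
    proof (rule key_pointwise[OF al th c0_pos])
      show "d (Suc s) \<omega> \<le> norm (x s \<omega> - al *\<^sub>R c s \<omega> - qs s \<omega>)"
        using d_next_le[OF w qK, of s] by (simp add: al_def)
      show "d s \<omega> \<le> norm (x s \<omega> - qs s \<omega>)"
        using infdist_le[OF qK, of "x s \<omega>"] by (simp add: d_def dist_norm)
      show "norm (x s \<omega> - qs s \<omega>) < d s \<omega> + al * \<delta>0"
        using ps by (simp add: Psel_def qs_def dist_norm al_def)
      show "al * r0 \<le> d s \<omega>" by (rule True)
      show "0 < r0" by (rule r0_pos)
      show "0 \<le> \<delta>0" using delta0_pos by simp
      show "0 \<le> d (Suc s) \<omega>" "d (Suc s) \<omega> \<le> DD" "0 \<le> d s \<omega>" "d s \<omega> \<le> DD" using d_bounds[OF w] by auto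
      show "\<bar>d (Suc s) \<omega> - d s \<omega>\<bar> \<le> al * norm (c s \<omega>)" using d_lip[OF w] by (simp add: al_def)
      show "E0 = exp (DD / c0)" by (simp add: E0_def)
      show "A1 = E0 + E0 * DD / (2 * c0)" by (simp add: A1_def)
    qed
    have "V (Suc s) \<omega> \<le> Wf \<omega> * Br \<omega>"
      using kp wf unfolding V_def hh_def Wf_def Br_def \<beta>_def hp_def uv_def nc_def th_def by simp
    moreover have "0 \<le> exp (E0*\<beta>*r0) * exp (lam * nc \<omega>)" by simp
    ultimately show ?thesis by linarith
  next
    case False
    hence nf: "\<omega> \<notin> far" by (simp add: far_def)
    have d': "d (Suc s) \<omega> \<le> al*r0 + al * nc \<omega>"
      using d_lip[OF w, of s] False by (simp add: al_def nc_def abs_le_iff)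
    have "th * hh (d (Suc s) \<omega>) \<le> th * (E0 * d (Suc s) \<omega>)"
      using hh_le2 d_bounds[OF w, of "Suc s"] th by (intro mult_left_mono) auto
    also have "\<dots> \<le> th * (E0 * (al*r0 + al * nc \<omega>))"
      using d' th E0_ge1 by (intro mult_left_mono) auto
    also have "\<dots> = E0*\<beta>*r0 + (E0*\<beta>) * nc \<omega>" by (simp add: \<beta>_def algebra_simps)
    also have "(E0*\<beta>) * nc \<omega> \<le> lam * nc \<omega>"
    proof -
      have "E0*\<beta> \<le> E0*(\<eta>*RR)" using ble E0_ge1 by (intro mult_left_mono) auto
      hence "E0*\<beta> \<le> lam" using eta3 by (simp add: mult_ac)
      thus ?thesis by (intro mult_right_mono) (auto simp: nc_def)
    qed
    finally have "V (Suc s) \<omega> \<le> exp (E0*\<beta>*r0) * exp (lam * nc \<omega>)"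
      by (simp add: V_def th_def flip: exp_add)
    moreover have "Wf \<omega> = 0" using nf by (simp add: Wf_def)
    ultimately show ?thesis by simp
  qed
  define f2 where "f2 \<omega> = Wf \<omega> * (\<beta>*hp \<omega>/(2*r0) + \<beta>*E0*al/(2*c0))" for \<omega>
  define f3 where "f3 \<omega> = Wf \<omega> * (\<beta>^2*A1^2/2)" for \<omega>
  define Z3 where "Z3 \<omega> = (nc \<omega>)^2 * exp (\<beta>*A1*nc \<omega>)" for \<omega>
  have f2_m[measurable]: "f2 \<in> borel_measurable (F s)" unfolding f2_def by measurable
  have f3_m[measurable]: "f3 \<in> borel_measurable (F s)" unfolding f3_def by measurable
  have Z3_m: "Z3 \<in> borel_measurable M" unfolding Z3_def by measurable
  have nc2_m: "(\<lambda>\<omega>. (nc \<omega>)^2) \<in> borel_measurable M" by measurable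
  have eqT: "Wf \<omega> * Br \<omega> = Wf \<omega> - \<beta> * (Wf \<omega> * hp \<omega> * (uv \<omega> \<bullet> c s \<omega>)) + f2 \<omega> * (nc \<omega>)^2 + f3 \<omega> * Z3 \<omega>" for \<omega>
    by (simp add: Br_def f2_def f3_def Z3_def algebra_simps)
  have f2_b: "0 \<le> f2 \<omega> \<and> f2 \<omega> \<le> Wmax * (\<beta>*E0/(2*r0) + \<beta>*E0*al/(2*c0))" if w: "\<omega> \<in> space M" for \<omega>
  proof -
    have "0 \<le> \<beta>*hp \<omega>/(2*r0) + \<beta>*E0*al/(2*c0)" using bpos hp_b[OF w] r0_pos E0_ge1 al c0_pos by simp
    moreover have "\<beta>*hp \<omega>/(2*r0) + \<beta>*E0*al/(2*c0) \<le> \<beta>*E0/(2*r0) + \<beta>*E0*al/(2*c0)"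
      using bpos hp_b[OF w] r0_pos by (simp add: divide_right_mono)
    ultimately show ?thesis using Wf_b[OF w] unfolding f2_def by (auto intro: mult_mono)
  qed
  have f3_b: "0 \<le> f3 \<omega> \<and> f3 \<omega> \<le> Wmax * (\<beta>^2*A1^2/2)" if w: "\<omega> \<in> space M" for \<omega>
    using Wf_b[OF w] unfolding f3_def by (auto intro: mult_right_mono)
  have bA1: "\<beta>*A1 \<le> lam/2"
  proof -
    have "\<beta>*A1 \<le> \<eta>*RR*A1" using ble A1_ge E0_ge1 by (intro mult_right_mono) auto
    thus ?thesis using eta1 by linarith
  qed
  have Z2b: "0 \<le> (nc \<omega>)^2 \<and> (nc \<omega>)^2 \<le> 8/lam^2 * exp (lam * norm (c s \<omega>))" for \<omega>
    using sq_exp_bound[of "nc \<omega>" 0] lam by (simp add: nc_def)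
  have Z3b: "0 \<le> Z3 \<omega> \<and> Z3 \<omega> \<le> 8/lam^2 * exp (lam * norm (c s \<omega>))" for \<omega>
    using sq_exp_bound[of "nc \<omega>" "\<beta>*A1"] bA1 bpos A1_ge E0_ge1 by (simp add: Z3_def nc_def)
  have I2: "integrable M (\<lambda>\<omega>. f2 \<omega> * (nc \<omega>)^2)" "(\<integral>\<omega>. f2 \<omega> * (nc \<omega>)^2 \<partial>M) \<le> 8/lam^2 * B * (\<integral>\<omega>. f2 \<omega> \<partial>M)"
    by (rule P2[OF f2_m f2_b nc2_m Z2b]; assumption)+
  have I3: "integrable M (\<lambda>\<omega>. f3 \<omega> * Z3 \<omega>)" "(\<integral>\<omega>. f3 \<omega> * Z3 \<omega> \<partial>M) \<le> 8/lam^2 * B * (\<integral>\<omega>. f3 \<omega> \<partial>M)"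
    by (rule P2[OF f3_m f3_b Z3_m Z3b]; assumption)+
  have Whp_m: "(\<lambda>\<omega>. Wf \<omega> * hp \<omega>) \<in> borel_measurable (F s)" by measurable
  have Whp_b: "\<bar>Wf \<omega> * hp \<omega>\<bar> \<le> Wmax * E0" if w: "\<omega> \<in> space M" for \<omega>
    using Wf_b[OF w] hp_b[OF w] by (simp add: abs_mult mult_mono)
  have I1: "integrable M (\<lambda>\<omega>. Wf \<omega> * hp \<omega> * (uv \<omega> \<bullet> c s \<omega>))"
      "(\<integral>\<omega>. Wf \<omega> * hp \<omega> * (uv \<omega> \<bullet> c s \<omega>) \<partial>M) = (\<integral>\<omega>. Wf \<omega> * hp \<omega> * (uv \<omega> \<bullet> Gv s \<omega>) \<partial>M)"
      "integrable M (\<lambda>\<omega>. Wf \<omega> * hp \<omega> * (uv \<omega> \<bullet> Gv s \<omega>))"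
    by (rule P1_vec[OF Whp_m Whp_b uv_m uv_b]; assumption)+
  have IW: "integrable M Wf" by (rule bnd_int[OF Wf_m, where C=Wmax]) (use Wf_b in auto)
  have IWhp: "integrable M (\<lambda>\<omega>. Wf \<omega> * hp \<omega>)" by (rule bnd_int[OF Whp_m Whp_b])
  have If2: "integrable M f2" by (rule bnd_int[OF f2_m, where C="Wmax * (\<beta>*E0/(2*r0) + \<beta>*E0*al/(2*c0))"]) (use f2_b in \<open>auto simp: abs_le_iff\<close>)
  have If3: "integrable M f3" by (rule bnd_int[OF f3_m, where C="Wmax * (\<beta>^2*A1^2/2)"]) (use f3_b in \<open>auto simp: abs_le_iff\<close>)
  define T1 where "T1 \<omega> = Wf \<omega> - \<beta> * (Wf \<omega> * hp \<omega> * (uv \<omega> \<bullet> c s \<omega>)) + f2 \<omega> * (nc \<omega>)^2 + f3 \<omega> * Z3 \<omega>" for \<omega>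
  have IT1: "integrable M T1" unfolding T1_def using IW I1(1) I2(1) I3(1) by auto
  have intT1: "(\<integral>\<omega>. T1 \<omega> \<partial>M) = (\<integral>\<omega>. Wf \<omega> \<partial>M) - \<beta> * (\<integral>\<omega>. Wf \<omega> * hp \<omega> * (uv \<omega> \<bullet> c s \<omega>) \<partial>M)
       + (\<integral>\<omega>. f2 \<omega> * (nc \<omega>)^2 \<partial>M) + (\<integral>\<omega>. f3 \<omega> * Z3 \<omega> \<partial>M)"
    unfolding T1_def using IW I1(1) I2(1) I3(1) by simp
  have lin: "(\<integral>\<omega>. \<kappa>/2 * (Wf \<omega> * hp \<omega>) \<partial>M) \<le> (\<integral>\<omega>. Wf \<omega> * hp \<omega> * (uv \<omega> \<bullet> Gv s \<omega>) \<partial>M)"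
  proof (rule integral_mono)
    show "integrable M (\<lambda>\<omega>. \<kappa>/2 * (Wf \<omega> * hp \<omega>))" using IWhp by simp
    show "integrable M (\<lambda>\<omega>. Wf \<omega> * hp \<omega> * (uv \<omega> \<bullet> Gv s \<omega>))" by (rule I1(3))
    fix \<omega> assume w: "\<omega> \<in> space M"
    show "\<kappa>/2 * (Wf \<omega> * hp \<omega>) \<le> Wf \<omega> * hp \<omega> * (uv \<omega> \<bullet> Gv s \<omega>)"
    proof (cases "\<omega> \<in> far")
      case False thus ?thesis by (simp add: Wf_def)
    next
      case True
      hence dd: "al*r0 \<le> d s \<omega>" and ex: "\<exists>k. Psel s \<omega> k" by (auto simp: far_def)
      have ps: "Psel s \<omega> (idx s \<omega>)" using Psel_idx[OF ex] .
      define r where "r = norm (x s \<omega> - qs s \<omega>)"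
      have "d s \<omega> \<le> r" using infdist_le[OF qs_in, of "x s \<omega>" s \<omega>] by (simp add: d_def dist_norm r_def)
      moreover have "0 < al*r0" using al r0_pos by simp
      ultimately have r: "r > 0" "al*r0 \<le> r" using dd by auto
      have g: "\<kappa> * r - \<kappa>*(al*r0)/2 < Gv s \<omega> \<bullet> (x s \<omega> - qs s \<omega>)"
        using ps by (simp add: Psel_def qs_def dist_norm al_def r_def)
      have "\<kappa>*(al*r0)/2 \<le> \<kappa>*r/2" using r kap by simp
      hence "\<kappa>/2 * r \<le> Gv s \<omega> \<bullet> (x s \<omega> - qs s \<omega>)" using g by simp
      hence "\<kappa>/2 \<le> (Gv s \<omega> \<bullet> (x s \<omega> - qs s \<omega>)) / r" using r by (simp add: field_simps)
      also have "\<dots> = uv \<omega> \<bullet> Gv s \<omega>" by (simp add: uv_def r_def inner_commute)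
      finally have "\<kappa>/2 \<le> uv \<omega> \<bullet> Gv s \<omega>" .
      moreover have "0 \<le> Wf \<omega> * hp \<omega>" using Wf_b[OF w] hp_b[OF w] by simp
      ultimately have "(Wf \<omega> * hp \<omega>) * (\<kappa>/2) \<le> (Wf \<omega> * hp \<omega>) * (uv \<omega> \<bullet> Gv s \<omega>)"
        by (intro mult_left_mono)
      thus ?thesis by (simp add: mult.commute)
    qed
  qed
  have intT1_le: "(\<integral>\<omega>. T1 \<omega> \<partial>M) \<le> (\<integral>\<omega>. Wf \<omega> - \<beta> * (\<kappa>/2 * (Wf \<omega> * hp \<omega>)) + mm * f2 \<omega> + mm * f3 \<omega> \<partial>M)"
  proof -
    have "(\<integral>\<omega>. T1 \<omega> \<partial>M) \<le> (\<integral>\<omega>. Wf \<omega> \<partial>M) - \<beta> * (\<integral>\<omega>. \<kappa>/2 * (Wf \<omega> * hp \<omega>) \<partial>M)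
       + mm * (\<integral>\<omega>. f2 \<omega> \<partial>M) + mm * (\<integral>\<omega>. f3 \<omega> \<partial>M)"
    proof -
      have "\<beta> * (\<integral>\<omega>. \<kappa>/2 * (Wf \<omega> * hp \<omega>) \<partial>M) \<le> \<beta> * (\<integral>\<omega>. Wf \<omega> * hp \<omega> * (uv \<omega> \<bullet> c s \<omega>) \<partial>M)"
        using lin I1(2) bpos by (intro mult_left_mono) auto
      moreover have "8/lam^2 * B = mm" by (simp add: mm_def)
      ultimately show ?thesis using intT1 I2(2) I3(2) by (simp add: mult.assoc)
    qed
    also have "\<dots> = (\<integral>\<omega>. Wf \<omega> - \<beta> * (\<kappa>/2 * (Wf \<omega> * hp \<omega>)) + mm * f2 \<omega> + mm * f3 \<omega> \<partial>M)"
      using IW IWhp If2 If3 by simp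
    finally show ?thesis .
  qed
  have pw2: "Wf \<omega> - \<beta> * (\<kappa>/2 * (Wf \<omega> * hp \<omega>)) + mm * f2 \<omega> + mm * f3 \<omega> \<le> qf * V s \<omega>"
    if w: "\<omega> \<in> space M" for \<omega>
  proof -
    have hp1: "1 \<le> hp \<omega>" "hp \<omega> \<le> E0" using hp_b[OF w] by auto
    have W0: "0 \<le> Wf \<omega>" using Wf_b[OF w] by simp
    have t1: "mm * (\<beta>*hp \<omega>/(2*r0)) = \<beta>*hp \<omega>*\<kappa>/8" using mm_r0 r0_pos by (simp add: field_simps)
    have t2: "mm * (\<beta>*E0*al/(2*c0)) \<le> \<beta>*hp \<omega>*\<kappa>/16"
    proof -
      have "mm * (\<beta>*E0*al/(2*c0)) = \<beta> * (al * E0 * mm / (2*c0))" by (simp add: field_simps)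
      also have "\<dots> \<le> \<beta> * (\<kappa>/16)" using S bpos by (intro mult_left_mono) (auto simp: al_def)
      also have "\<dots> \<le> \<beta>*hp \<omega>*\<kappa>/16" using hp1 bpos kap by (simp add: mult_left_mono)
      finally show ?thesis .
    qed
    have t3: "mm * (\<beta>^2*A1^2/2) \<le> \<beta>*hp \<omega>*\<kappa>/16"
    proof -
      have l1: "\<beta>*A1^2*mm/2 \<le> \<eta>*RR*A1^2*mm/2" using ble mm_pos by (intro divide_right_mono mult_right_mono) auto
      have l2: "\<beta>*A1^2*mm/2 \<le> \<kappa>/16" using l1 eta2 by linarith
      have "mm * (\<beta>^2*A1^2/2) = \<beta> * (\<beta>*A1^2*mm/2)" by (simp add: power2_eq_square field_simps)
      also have "\<dots> \<le> \<beta> * (\<kappa>/16)" using l2 bpos by (intro mult_left_mono) auto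
      also have "\<dots> \<le> \<beta>*hp \<omega>*\<kappa>/16" using hp1 bpos kap by (simp add: mult_left_mono)
      finally show ?thesis .
    qed
    have "Wf \<omega> - \<beta> * (\<kappa>/2 * (Wf \<omega> * hp \<omega>)) + mm * f2 \<omega> + mm * f3 \<omega>
        = Wf \<omega> * (1 - \<beta>*hp \<omega>*\<kappa>/2 + mm * (\<beta>*hp \<omega>/(2*r0)) + mm * (\<beta>*E0*al/(2*c0)) + mm * (\<beta>^2*A1^2/2))"
      by (simp add: f2_def f3_def algebra_simps)
    also have "\<dots> \<le> Wf \<omega> * (1 - \<beta>*hp \<omega>*\<kappa>/4)"
    proof (rule mult_left_mono[OF _ W0])
      show "1 - \<beta>*hp \<omega>*\<kappa>/2 + mm * (\<beta>*hp \<omega>/(2*r0)) + mm * (\<beta>*E0*al/(2*c0)) + mm * (\<beta>^2*A1^2/2) \<le> 1 - \<beta>*hp \<omega>*\<kappa>/4"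
        using t1 t2 t3 by linarith
    qed
    also have "\<dots> \<le> Wf \<omega> * exp (-(\<beta>*hp \<omega>*\<kappa>/4))"
      using W0 exp_ge_add_one_self[of "-(\<beta>*hp \<omega>*\<kappa>/4)"] by (intro mult_left_mono) auto
    also have "\<dots> \<le> qf * V s \<omega>"
    proof (cases "\<omega> \<in> far")
      case False thus ?thesis using qf_pos by (simp add: Wf_def V_def)
    next
      case True
      have d0: "0 \<le> d s \<omega>" using d_bounds[OF w] by simp
      have "th * hh (d s \<omega>) \<le> \<theta> s * hh (d s \<omega>) + \<eta>/a * hh (d s \<omega>)"
      proof -
        have "(th - \<theta> s) * hh (d s \<omega>) \<le> \<eta>/a * hh (d s \<omega>)"
          using theta_growth[of s] hh_nonneg[OF d0] by (intro mult_right_mono) (auto simp: th_def)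
        thus ?thesis by (simp add: algebra_simps)
      qed
      also have "\<eta>/a * hh (d s \<omega>) \<le> \<eta>/a * (c0 * hp \<omega>)"
        using hh_le[OF d0] eta_pos a_pos by (intro mult_left_mono) (auto simp: hp_def)
      also have "\<eta>/a * (c0 * hp \<omega>) = \<eta>*hp \<omega>*\<kappa>/8" using a_pos by (simp add: c0_def field_simps)
      also have "\<eta>*hp \<omega>*\<kappa>/8 \<le> \<beta>*hp \<omega>*\<kappa>/8" using bge hp1 kap by (simp add: mult_right_mono)
      finally have e1: "th * hh (d s \<omega>) \<le> \<theta> s * hh (d s \<omega>) + \<beta>*hp \<omega>*\<kappa>/8" by simp
      have "\<beta>*1 \<le> \<beta>*hp \<omega>" using hp1 bpos by (intro mult_left_mono) auto
      hence e2: "\<eta> \<le> \<beta>*hp \<omega>" using bge by simp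
      have e3: "\<eta>*\<kappa> \<le> \<beta>*hp \<omega>*\<kappa>" using e2 kap by (intro mult_right_mono) auto
      have dd: "\<beta> * hp \<omega> * \<delta>0 = \<beta>*hp \<omega>*\<kappa>/32" by (simp add: \<delta>0_def)
      have "th * hh (d s \<omega>) + \<beta> * hp \<omega> * \<delta>0 + (-(\<beta>*hp \<omega>*\<kappa>/4)) \<le> \<theta> s * hh (d s \<omega>) - 3*\<eta>*\<kappa>/32"
        using e1 e3 dd by linarith
      hence "exp (th * hh (d s \<omega>) + \<beta> * hp \<omega> * \<delta>0) * exp (-(\<beta>*hp \<omega>*\<kappa>/4)) \<le> exp (\<theta> s * hh (d s \<omega>)) * qf"
        by (simp add: qf_def flip: exp_add)
      thus ?thesis using True by (simp add: Wf_def V_def mult.commute)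
    qed
    finally show ?thesis .
  qed
  have "(\<integral>\<omega>. V (Suc s) \<omega> \<partial>M) \<le> (\<integral>\<omega>. T1 \<omega> + exp (E0*\<beta>*r0) * exp (lam * norm (c s \<omega>)) \<partial>M)"
  proof (rule integral_mono_AE)
    show "integrable M (V (Suc s))" by (rule V_int)
    show "integrable M (\<lambda>\<omega>. T1 \<omega> + exp (E0*\<beta>*r0) * exp (lam * norm (c s \<omega>)))"
      using IT1 expc_int[of s] by simp
    show "AE \<omega> in M. V (Suc s) \<omega> \<le> T1 \<omega> + exp (E0*\<beta>*r0) * exp (lam * norm (c s \<omega>))"
      using ae_Psel[of s]
    proof (rule AE_mp, intro AE_I2 impI)
      fix \<omega> assume w: "\<omega> \<in> space M" and ex: "\<exists>k. Psel s \<omega> k"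
      show "V (Suc s) \<omega> \<le> T1 \<omega> + exp (E0*\<beta>*r0) * exp (lam * norm (c s \<omega>))"
        using pw[OF w ex] eqT[of \<omega>] by (simp add: T1_def nc_def)
    qed
  qed
  also have "\<dots> = (\<integral>\<omega>. T1 \<omega> \<partial>M) + exp (E0*\<beta>*r0) * (\<integral>\<omega>. exp (lam * norm (c s \<omega>)) \<partial>M)"
    using IT1 expc_int[of s] by simp
  also have "(\<integral>\<omega>. T1 \<omega> \<partial>M) \<le> qf * (\<integral>\<omega>. V s \<omega> \<partial>M)"
  proof -
    have "(\<integral>\<omega>. Wf \<omega> - \<beta> * (\<kappa>/2 * (Wf \<omega> * hp \<omega>)) + mm * f2 \<omega> + mm * f3 \<omega> \<partial>M) \<le> (\<integral>\<omega>. qf * V s \<omega> \<partial>M)"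
      using IW IWhp If2 If3 V_int[of s] pw2 by (intro integral_mono) auto
    thus ?thesis using intT1_le by simp
  qed
  also have "exp (E0*\<beta>*r0) * (\<integral>\<omega>. exp (lam * norm (c s \<omega>)) \<partial>M) \<le> C0"
  proof -
    have "exp (E0*\<beta>*r0) * (\<integral>\<omega>. exp (lam * norm (c s \<omega>)) \<partial>M) \<le> exp (E0*\<beta>*r0) * B"
      using expc_int_le[of s] by (intro mult_left_mono) auto
    also have "\<dots> \<le> exp (E0*\<eta>*RR*r0) * B"
    proof -
      have "E0*\<beta>*r0 \<le> E0*(\<eta>*RR)*r0" using ble E0_ge1 r0_pos by (intro mult_right_mono mult_left_mono) auto
      thus ?thesis using B1 by (simp add: mult.assoc)
    qed
    finally show ?thesis by (simp add: C0_def)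
  qed
  finally show ?thesis by simp
qed

end



context psgd begin

lemma int_le_const: "f \<in> borel_measurable M \<Longrightarrow> (\<And>\<omega>. \<omega> \<in> space M \<Longrightarrow> 0 \<le> f \<omega> \<and> f \<omega> \<le> C) \<Longrightarrow> (\<integral>\<omega>. f \<omega> \<partial>M) \<le> (C::real)"
proof -
  assume m: "f \<in> borel_measurable M" and b: "\<And>\<omega>. \<omega> \<in> space M \<Longrightarrow> 0 \<le> f \<omega> \<and> f \<omega> \<le> C"
  have "(\<integral>\<omega>. f \<omega> \<partial>M) \<le> (\<integral>\<omega>. C \<partial>M)"
    by (rule integral_mono) (auto intro!: integrable_const_bound[where B=C] AE_I2 m dest: b)
  thus ?thesis by (simp add: prob_space)
qed

lemma uniform_bound:
  assumes g: "\<gamma> > 0"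
  shows "\<exists>C3>0. \<forall>n. (\<integral>\<omega>. V n \<omega> \<partial>M) \<le> C3"
proof -
  obtain S0 where S0: "\<forall>s\<ge>S0. \<alpha> s * E0 * mm / (2*c0) \<le> \<kappa>/16" using S0_exists[OF g] by blast
  define C3 where "C3 = exp (\<theta> S0 * hh DD) + C0/(1-qf)"
  have C3p: "C3 > 0" using C0_pos qf_lt1 by (simp add: C3_def add_pos_nonneg)
  have small: "(\<integral>\<omega>. V n \<omega> \<partial>M) \<le> exp (\<theta> S0 * hh DD)" if "n \<le> S0" for n
  proof -
    have "(\<integral>\<omega>. V n \<omega> \<partial>M) \<le> exp (\<theta> n * hh DD)"
      by (rule int_le_const) (use V_bounds V_meas[of n] meas_M in \<open>auto simp: less_imp_le\<close>)
    also have "\<dots> \<le> exp (\<theta> S0 * hh DD)"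
      using theta_mono[OF that] hh_nonneg[OF DD_nonneg] by (simp add: mult_right_mono)
    finally show ?thesis .
  qed
  have "(\<integral>\<omega>. V n \<omega> \<partial>M) \<le> C3" if "S0 \<le> n" for n
    using that
  proof (induction n rule: dec_induct)
    case base
    have "0 \<le> C0/(1-qf)" using C0_pos qf_lt1 by simp
    thus ?case using small[of S0] unfolding C3_def by linarith
  next
    case (step n)
    have "(\<integral>\<omega>. V (Suc n) \<omega> \<partial>M) \<le> qf * (\<integral>\<omega>. V n \<omega> \<partial>M) + C0"
      using one_step S0 step(1) by blast
    also have "\<dots> \<le> qf * C3 + C0" using step(3) qf_pos by (simp add: mult_left_mono)
    also have "\<dots> \<le> C3"
    proof -
      have "C0 = (1-qf) * (C0/(1-qf))" using qf_lt1 by simp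
      also have "\<dots> \<le> (1-qf) * C3" using qf_lt1 by (intro mult_left_mono) (auto simp: C3_def)
      finally show ?thesis by (simp add: algebra_simps)
    qed
    finally show ?case .
  qed
  moreover have "exp (\<theta> S0 * hh DD) \<le> C3" using C0_pos qf_lt1 by (simp add: C3_def)
  ultimately have "\<forall>n. (\<integral>\<omega>. V n \<omega> \<partial>M) \<le> C3"
    using small by (metis nat_le_linear order_trans)
  thus ?thesis using C3p by blast
qed

lemma d_measM: "d t \<in> borel_measurable M" using d_meas meas_M by blast

lemma final:
  assumes I: "I > 0" and C3: "C3 > 0"
    and bnd: "\<And>t. (\<integral>\<omega>. exp (I * rpow (real t) \<gamma> * d (Suc t) \<omega>) \<partial>M) \<le> C3"
  shows "\<exists>J I K L. J > 0 \<and> I > 0 \<and> K > 0 \<and> L > 0 \<and>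
    (\<forall>t::nat. \<forall>z::real. z \<ge> 0 \<longrightarrow>
       measure M {\<omega>\<in>space M. infdist (x (Suc t) \<omega>) (argmin_set X l) \<ge> z}
         \<le> J * exp (- I * rpow (real t) \<gamma> * z)) \<and>
    (\<forall>t::nat. t \<ge> 1 \<longrightarrow>
       (\<integral>\<omega>. infdist (x (Suc t) \<omega>) (argmin_set X l) \<partial>M) \<le> K / rpow (real t) \<gamma>) \<and>
    (\<forall>t::nat. t \<ge> 1 \<longrightarrow>
       (\<integral>\<omega>. l (x (Suc t) \<omega>) - (INF y\<in>X. l y) \<partial>M) \<le> L / rpow (real t) \<gamma>)"
proof -
  have rpow_nn: "0 \<le> rpow (real t) \<gamma>" for t by (simp add: rpow_def)
  have rpow_pos: "0 < rpow (real t) \<gamma>" if "t \<ge> 1" for t using that by (simp add: rpow_def)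
  have Cl: "0 \<le> Cl" using lip by (rule lipschitz_on_nonneg)
  have dK: "infdist (x t \<omega>) (argmin_set X l) = d t \<omega>" for t \<omega> by (simp add: d_def K_def)
  define g where "g t \<omega> = exp (I * rpow (real t) \<gamma> * d (Suc t) \<omega>)" for t \<omega>
  have g_m: "g t \<in> borel_measurable M" for t unfolding g_def using d_measM[of "Suc t"] by measurable
  have g_int: "integrable M (g t)" for t
  proof (rule integrable_const_bound[where B="exp (I * rpow (real t) \<gamma> * DD)"])
    show "AE \<omega> in M. norm (g t \<omega>) \<le> exp (I * rpow (real t) \<gamma> * DD)"
    proof (rule AE_I2)
      fix \<omega> assume w: "\<omega> \<in> space M"
      have "I * rpow (real t) \<gamma> * d (Suc t) \<omega> \<le> I * rpow (real t) \<gamma> * DD"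
        using d_bounds[OF w, of "Suc t"] I rpow_nn[of t] by (intro mult_left_mono) auto
      thus "norm (g t \<omega>) \<le> exp (I * rpow (real t) \<gamma> * DD)" by (simp add: g_def)
    qed
  qed (rule g_m)
  have d_int: "integrable M (d t)" for t
    by (rule integrable_const_bound[where B=DD]) (use d_bounds d_measM in \<open>auto intro!: AE_I2\<close>)
  have A: "measure M {\<omega>\<in>space M. infdist (x (Suc t) \<omega>) (argmin_set X l) \<ge> z} \<le> C3 * exp (- I * rpow (real t) \<gamma> * z)"
    if z: "z \<ge> 0" for t z
  proof -
    define e where "e = exp (I * rpow (real t) \<gamma> * z)"
    have e: "e > 0" by (simp add: e_def)
    have "{\<omega>\<in>space M. infdist (x (Suc t) \<omega>) (argmin_set X l) \<ge> z} \<subseteq> {\<omega>\<in>space M. e \<le> g t \<omega>}"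
    proof safe
      fix \<omega> assume w: "\<omega> \<in> space M" and zz: "z \<le> infdist (x (Suc t) \<omega>) (argmin_set X l)"
      have "I * rpow (real t) \<gamma> * z \<le> I * rpow (real t) \<gamma> * d (Suc t) \<omega>"
        using zz I rpow_nn[of t] by (intro mult_left_mono) (auto simp: dK)
      thus "e \<le> g t \<omega>" by (simp add: e_def g_def)
    qed
    hence "measure M {\<omega>\<in>space M. infdist (x (Suc t) \<omega>) (argmin_set X l) \<ge> z} \<le> measure M {\<omega>\<in>space M. e \<le> g t \<omega>}"
      using g_m[of t] by (intro finite_measure_mono) auto
    also have "\<dots> \<le> (\<integral>\<omega>. g t \<omega> \<partial>M) / e"
      by (rule integral_Markov_inequality_measure[OF g_int sets.top]) (auto simp: g_def e intro!: AE_I2)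
    also have "\<dots> \<le> C3 / e" using bnd[of t] e by (simp add: g_def divide_right_mono)
    also have "\<dots> = C3 * exp (- I * rpow (real t) \<gamma> * z)" by (simp add: e_def exp_minus field_simps)
    finally show ?thesis .
  qed
  have Bd: "(\<integral>\<omega>. d (Suc t) \<omega> \<partial>M) \<le> (C3/I) / rpow (real t) \<gamma>" if t: "t \<ge> 1" for t
  proof -
    define R where "R = I * rpow (real t) \<gamma>"
    have R: "R > 0" using I rpow_pos[OF t] by (simp add: R_def)
    have "(\<integral>\<omega>. R * d (Suc t) \<omega> \<partial>M) \<le> (\<integral>\<omega>. g t \<omega> \<partial>M)"
    proof (rule integral_mono)
      show "integrable M (\<lambda>\<omega>. R * d (Suc t) \<omega>)" using d_int by simp
      show "integrable M (g t)" by (rule g_int)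
      fix \<omega> show "R * d (Suc t) \<omega> \<le> g t \<omega>"
        using exp_ge_add_one_self[of "R * d (Suc t) \<omega>"] unfolding g_def R_def by linarith
    qed
    also have "\<dots> \<le> C3" using bnd[of t] by (simp add: g_def)
    finally have "R * (\<integral>\<omega>. d (Suc t) \<omega> \<partial>M) \<le> C3" by simp
    thus ?thesis using R I rpow_pos[OF t] by (simp add: R_def field_simps)
  qed
  have Cd: "(\<integral>\<omega>. l (x (Suc t) \<omega>) - (INF y\<in>X. l y) \<partial>M) \<le> ((Cl+1)*C3/I) / rpow (real t) \<gamma>" if t: "t \<ge> 1" for t
  proof (cases "integrable M (\<lambda>\<omega>. l (x (Suc t) \<omega>) - (INF y\<in>X. l y))")
    case False
    thus ?thesis using Cl C3 I rpow_pos[OF t] by (simp add: not_integrable_integral_eq)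
  next
    case True
    have "(\<integral>\<omega>. l (x (Suc t) \<omega>) - (INF y\<in>X. l y) \<partial>M) \<le> (\<integral>\<omega>. Cl * d (Suc t) \<omega> \<partial>M)"
    proof (rule integral_mono[OF True])
      show "integrable M (\<lambda>\<omega>. Cl * d (Suc t) \<omega>)" using d_int by simp
      fix \<omega> assume w: "\<omega> \<in> space M"
      define y where "y = x (Suc t) \<omega>"
      have y: "y \<in> X" using x_in[OF w] by (simp add: y_def)
      obtain k where k: "k \<in> K" "infdist y K = dist y k" using infdist_attains_inf[OF K_closed K_ne] by blast
      have kX: "k \<in> X" and kmin: "\<And>z. z \<in> X \<Longrightarrow> l k \<le> l z" using k(1) by (auto simp: K_def argmin_set_def)
      have "(INF y\<in>X. l y) = l k" by (rule cInf_eq_minimum) (use kX kmin in auto)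
      moreover have "l y - l k \<le> Cl * dist y k"
        using lipschitz_onD[OF lip y kX] by (simp add: dist_real_def)
      ultimately show "l (x (Suc t) \<omega>) - (INF y\<in>X. l y) \<le> Cl * d (Suc t) \<omega>"
        using k(2) by (simp add: y_def d_def)
    qed
    also have "\<dots> = Cl * (\<integral>\<omega>. d (Suc t) \<omega> \<partial>M)" by simp
    also have "\<dots> \<le> Cl * ((C3/I) / rpow (real t) \<gamma>)" using Bd[OF t] Cl by (intro mult_left_mono)
    also have "\<dots> \<le> (Cl+1) * ((C3/I) / rpow (real t) \<gamma>)"
      using C3 I rpow_pos[OF t] by (intro mult_right_mono) auto
    finally show ?thesis by simp
  qed
  show ?thesis
    apply (rule exI[of _ C3], rule exI[of _ I], rule exI[of _ "C3/I"], rule exI[of _ "(Cl+1)*C3/I"])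
    using C3 I Cl A Bd Cd by (auto simp: dK add_pos_nonneg)
qed

end



context psgd begin

lemma main:
  "\<exists>J I K L. J > 0 \<and> I > 0 \<and> K > 0 \<and> L > 0 \<and>
    (\<forall>t::nat. \<forall>z::real. z \<ge> 0 \<longrightarrow>
       measure M {\<omega>\<in>space M. infdist (x (Suc t) \<omega>) (argmin_set X l) \<ge> z}
         \<le> J * exp (- I * rpow (real t) \<gamma> * z)) \<and>
    (\<forall>t::nat. t \<ge> 1 \<longrightarrow>
       (\<integral>\<omega>. infdist (x (Suc t) \<omega>) (argmin_set X l) \<partial>M) \<le> K / rpow (real t) \<gamma>) \<and>
    (\<forall>t::nat. t \<ge> 1 \<longrightarrow>
       (\<integral>\<omega>. l (x (Suc t) \<omega>) - (INF y\<in>X. l y) \<partial>M) \<le> L / rpow (real t) \<gamma>)"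
proof (cases "\<gamma> = 0")
  case True
  show ?thesis
  proof (rule final[of 1 "exp DD"])
    fix t
    show "(\<integral>\<omega>. exp (1 * rpow (real t) \<gamma> * d (Suc t) \<omega>) \<partial>M) \<le> exp DD"
      by (rule int_le_const) (use d_measM[of "Suc t"] d_bounds True in \<open>auto simp: rpow_def\<close>)
  qed auto
next
  case False
  hence g: "\<gamma> > 0" using \<gamma>_ge by simp
  obtain C3 where C3: "C3 > 0" "\<And>n. (\<integral>\<omega>. V n \<omega> \<partial>M) \<le> C3" using uniform_bound[OF g] by blast
  show ?thesis
  proof (rule final[of "\<eta>/a" C3])
    show "\<eta>/a > 0" using eta_pos a_pos by simp
    show "C3 > 0" by (rule C3)
    fix t
    have "(\<integral>\<omega>. exp (\<eta>/a * rpow (real t) \<gamma> * d (Suc t) \<omega>) \<partial>M) \<le> (\<integral>\<omega>. V (Suc t) \<omega> \<partial>M)"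
    proof (rule integral_mono)
      show "integrable M (V (Suc t))" by (rule V_int)
      show "integrable M (\<lambda>\<omega>. exp (\<eta>/a * rpow (real t) \<gamma> * d (Suc t) \<omega>))"
      proof (rule integrable_const_bound[where B="exp (\<eta>/a * rpow (real t) \<gamma> * DD)"])
        show "(\<lambda>\<omega>. exp (\<eta>/a * rpow (real t) \<gamma> * d (Suc t) \<omega>)) \<in> borel_measurable M"
          using d_measM[of "Suc t"] by measurable
        show "AE \<omega> in M. norm (exp (\<eta>/a * rpow (real t) \<gamma> * d (Suc t) \<omega>)) \<le> exp (\<eta>/a * rpow (real t) \<gamma> * DD)"
        proof (rule AE_I2)
          fix \<omega> assume w: "\<omega> \<in> space M"
          have "\<eta>/a * rpow (real t) \<gamma> * d (Suc t) \<omega> \<le> \<eta>/a * rpow (real t) \<gamma> * DD"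
            using d_bounds[OF w, of "Suc t"] eta_pos a_pos by (intro mult_left_mono) (auto simp: rpow_def)
          thus "norm (exp (\<eta>/a * rpow (real t) \<gamma> * d (Suc t) \<omega>)) \<le> exp (\<eta>/a * rpow (real t) \<gamma> * DD)" by simp
        qed
      qed
      fix \<omega> assume w: "\<omega> \<in> space M"
      have d0: "0 \<le> d (Suc t) \<omega>" using d_bounds[OF w] by simp
      have "rpow (real t) \<gamma> \<le> (u + real (Suc t)) powr \<gamma>"
        using False g u_pos by (simp add: rpow_def powr_mono2)
      hence "\<eta>/a * rpow (real t) \<gamma> \<le> \<theta> (Suc t)"
        using eta_pos a_pos by (simp add: \<theta>_def divide_right_mono mult_left_mono)
      moreover have "d (Suc t) \<omega> \<le> hh (d (Suc t) \<omega>)" by (rule hh_ge[OF d0])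
      moreover have "0 \<le> \<eta>/a * rpow (real t) \<gamma>" using eta_pos a_pos by (simp add: rpow_def)
      ultimately have "\<eta>/a * rpow (real t) \<gamma> * d (Suc t) \<omega> \<le> \<theta> (Suc t) * hh (d (Suc t) \<omega>)"
        using d0 by (intro mult_mono) auto
      thus "exp (\<eta>/a * rpow (real t) \<gamma> * d (Suc t) \<omega>) \<le> V (Suc t) \<omega>" by (simp add: V_def)
    qed
    also have "\<dots> \<le> C3" by (rule C3)
    finally show "(\<integral>\<omega>. exp (\<eta>/a * rpow (real t) \<gamma> * d (Suc t) \<omega>) \<partial>M) \<le> C3" .
  qed
qed

end

theorem theorem2:
  fixes X :: "'a::euclidean_space set"
    and l :: "'a \<Rightarrow> real"
    and grad :: "'a \<Rightarrow> 'a"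
    and M :: "'w measure"
    and F :: "nat \<Rightarrow> 'w measure"
    and x c :: "nat \<Rightarrow> 'w \<Rightarrow> 'a"
    and a u \<gamma> :: real
  assumes X_ne: "X \<noteq> {}" and X_closed: "closed X" and X_bounded: "bounded X"
      and X_convex: "convex X"
      and l_lip: "\<exists>C. C-lipschitz_on X l"
      and prob: "prob_space M"
      and filt: "is_filtration M F"
      and x0_meas: "x 0 \<in> borel_measurable (F 0)"
      and x0_in: "\<forall>\<omega>\<in>space M. x 0 \<omega> \<in> X"
      and c_meas: "\<forall>t. c t \<in> borel_measurable (F (Suc t))"
      and c_cond: "\<forall>t. cond_exp_eq M (F t) (c t) (\<lambda>\<omega>. grad (x t \<omega>))"
      and step: "\<forall>t. \<forall>\<omega>\<in>space M.
                   x (Suc t) \<omega> = closest_point X (x t \<omega> - (a / (u + real t) powr \<gamma>) *\<^sub>R c t \<omega>)"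
      and a_pos: "a > 0" and u_pos: "u > 0" and \<gamma>_ge: "0 \<le> \<gamma>" and \<gamma>_le: "\<gamma> \<le> 1"
      and D1: "\<exists>\<kappa>>0. \<forall>y\<in>X. \<forall>ys\<in>argmin_set X l.
                 dist y ys = infdist y (argmin_set X l) \<longrightarrow>
                 grad y \<bullet> (y - ys) \<ge> \<kappa> * norm (y - ys)"
      and D2: "\<exists>lam>0. \<exists>B::real. \<forall>t. AE \<omega> in M.
                 nn_cond_exp M (F t) (\<lambda>\<omega>. ennreal (exp (lam * norm (c t \<omega>)))) \<omega> \<le> ennreal B"
  shows "\<exists>J I K L. J > 0 \<and> I > 0 \<and> K > 0 \<and> L > 0 \<and>
    (\<forall>t::nat. \<forall>z::real. z \<ge> 0 \<longrightarrow>
       measure M {\<omega>\<in>space M. infdist (x (Suc t) \<omega>) (argmin_set X l) \<ge> z}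
         \<le> J * exp (- I * rpow (real t) \<gamma> * z)) \<and>
    (\<forall>t::nat. t \<ge> 1 \<longrightarrow>
       (\<integral>\<omega>. infdist (x (Suc t) \<omega>) (argmin_set X l) \<partial>M) \<le> K / rpow (real t) \<gamma>) \<and>
    (\<forall>t::nat. t \<ge> 1 \<longrightarrow>
       (\<integral>\<omega>. l (x (Suc t) \<omega>) - (INF y\<in>X. l y) \<partial>M) \<le> L / rpow (real t) \<gamma>)"
proof -
  obtain Cl where Cl: "Cl-lipschitz_on X l" using l_lip by blast
  obtain \<kappa> where kap: "\<kappa> > 0" and D1': "\<forall>y\<in>X. \<forall>ys\<in>argmin_set X l.
                 dist y ys = infdist y (argmin_set X l) \<longrightarrow>
                 grad y \<bullet> (y - ys) \<ge> \<kappa> * norm (y - ys)" using D1 by blast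
  obtain lam B where lam: "lam > 0" and D2': "\<forall>t. AE \<omega> in M.
                 nn_cond_exp M (F t) (\<lambda>\<omega>. ennreal (exp (lam * norm (c t \<omega>)))) \<omega> \<le> ennreal B" using D2 by blast
  define B' where "B' = max B 1"
  have D2'': "\<forall>t. AE \<omega> in M.
                 nn_cond_exp M (F t) (\<lambda>\<omega>. ennreal (exp (lam * norm (c t \<omega>)))) \<omega> \<le> ennreal B'"
  proof
    fix t
    show "AE \<omega> in M. nn_cond_exp M (F t) (\<lambda>\<omega>. ennreal (exp (lam * norm (c t \<omega>)))) \<omega> \<le> ennreal B'"
      using D2'[rule_format, of t]
    proof (rule AE_mp, intro AE_I2 impI)
      fix \<omega> assume "nn_cond_exp M (F t) (\<lambda>\<omega>. ennreal (exp (lam * norm (c t \<omega>)))) \<omega> \<le> ennreal B"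
      moreover have "ennreal B \<le> ennreal B'" by (simp add: B'_def ennreal_leI)
      ultimately show "nn_cond_exp M (F t) (\<lambda>\<omega>. ennreal (exp (lam * norm (c t \<omega>)))) \<omega> \<le> ennreal B'"
        by (rule order_trans)
    qed
  qed
  interpret P: psgd M X l grad F x c a u \<gamma> \<kappa> lam B' Cl
    by (intro psgd.intro psgd_axioms.intro prob)
       (use X_ne X_closed X_bounded X_convex Cl filt x0_meas x0_in c_meas c_cond step a_pos u_pos
          \<gamma>_ge \<gamma>_le kap D1' lam D2'' in \<open>auto simp: B'_def\<close>)
  show ?thesis by (rule P.main)
qed


end
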